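(* Let $G$ be a simple connected graph with $n$ vertices and $m$ edges, let $k\ge1$ and $r\ge1$ be integers, and let $S_{2k}^r(G)$ be the $r$-th iterated $2k$-parallel subdivision graph of $G$. Write $E'_{r-1}$ and $V'_{r-1}$ for the edge and vertex sets of $S_{2k}^{r-1}(G)$ and $\Gamma(S_{2k}^{r-1}(G))$ for the multiset of normalized Laplacian eigenvalues of $S_{2k}^{r-1}(G)$. Then the multiset of normalized Laplacian eigenvalues of $S_{2k}^r(G)$ is $$g_1(\Gamma(S_{2k}^{r-1}(G))\setminus\{0,2\})\cup g_2(\Gamma(S_{2k}^{r-1}(G))\setminus\{0,2\})\cup g_3(\Gamma(S_{2k}^{r-1}(G))\setminus\{0,2\})\cup\{0,2\}\cup\{\tfrac12\}^{(k|E'_{r-1}|-|V'_{r-1}|+2)}\cup\{\tfrac32\}^{(k|E'_{r-1}|-|V'_{r-1}|+2)}$$ if $G$ is bipartite, and $$g_1(\Gamma(S_{2k}^{r-1}(G))\setminus\{0\})\cup g_2(\Gamma(S_{2k}^{r-1}(G))\setminus\{0\})\cup g_3(\Gamma(S_{2k}^{r-1}(G))\setminus\{0\})\cup\{0\}\cup\{\tfrac12\}^{(k|E'_{r-1}|-|V'_{r-1}|)}\cup\{\tfrac32\}^{(k|E'_{r-1}|-|V'_{r-1}|+2)}$$ if $G$ is non-bipartite, where $\{x\}^{(c)}$ denotes the multiset consisting of $x$ repeated $c$ times and all unions are multiset unions.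
   Context: The normalized Laplacian of a graph $H$ without isolated vertices is $I-D(H)^{-1/2}A(H)D(H)^{-1/2}$. The $2k$-parallel subdivision graph $S_{2k}(H)$ is obtained from $H$ by replacing each edge $uv$ by $k$ internally disjoint paths $u-w_1-w_2-v$ of length $3$ (each with its own two new internal vertices). Iterates: $S_{2k}^0(G)=G$, $S_{2k}^r(G)=S_{2k}(S_{2k}^{r-1}(G))$. For a real number $x$, let $g_1(x),g_2(x),g_3(x)$ denote the three roots of $4\zeta^3-12\zeta^2+9\zeta-x=0$; for a multiset $U$ of reals, $g_l(U)$ is the multiset $\bigcup_{x\in U}\{g_l(x)\}$ ($l=1,2,3$). In $\Gamma\setminus\{0,2\}$ (resp. $\Gamma\setminus\{0\}$) one copy of each listed value is removed. *)

theory Defs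
  imports Complex_Main "HOL-Library.Multiset" "HOL-Computational_Algebra.Polynomial"
    "Jordan_Normal_Form.Char_Poly"
begin

type_synonym 'v graph = "'v set \<times> 'v set set"

definition simple_graph :: "'v graph \<Rightarrow> bool" where
  "simple_graph G \<longleftrightarrow> finite (fst G) \<and> (\<forall>e\<in>snd G. e \<subseteq> fst G \<and> card e = 2)"

definition connected_graph :: "'v graph \<Rightarrow> bool" where
  "connected_graph G \<longleftrightarrow> fst G \<noteq> {} \<and>
     (\<forall>u\<in>fst G. \<forall>v\<in>fst G. (u, v) \<in> {(x, y). {x, y} \<in> snd G}\<^sup>*)"

definition bipartite_graph :: "'v graph \<Rightarrow> bool" where
  "bipartite_graph G \<longleftrightarrow> (\<exists>A. \<forall>e\<in>snd G. card (e \<inter> A) = 1)"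

definition degree :: "'v graph \<Rightarrow> 'v \<Rightarrow> nat" where
  "degree G v = card {e \<in> snd G. v \<in> e}"

text \<open>Vertices of iterated subdivisions: original vertices, and subdivision vertices.
  \<open>Mid u v i\<close> is the internal vertex adjacent to \<open>u\<close> on the \<open>i\<close>-th path replacing edge uv;
  the path is u - Mid u v i - Mid v u i - v.\<close>
datatype 'a svert = Base 'a | Mid "'a svert" "'a svert" nat

definition lift_graph :: "'a graph \<Rightarrow> 'a svert graph" where
  "lift_graph G = (Base ` fst G, (\<lambda>e. Base ` e) ` snd G)"

definition S2k :: "nat \<Rightarrow> 'a svert graph \<Rightarrow> 'a svert graph" where
  "S2k k G = (fst G \<union> {Mid u v i | u v i. {u, v} \<in> snd G \<and> i < k},
              {{u, Mid u v i} | u v i. {u, v} \<in> snd G \<and> i < k}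
              \<union> {{Mid u v i, Mid v u i} | u v i. {u, v} \<in> snd G \<and> i < k})"

text \<open>An enumeration of a finite vertex set (the spectrum does not depend on the choice).\<close>
definition vlist :: "'v set \<Rightarrow> 'v list" where
  "vlist V = (SOME xs. distinct xs \<and> set xs = V)"

text \<open>Normalized Laplacian I - D^(-1/2) A D^(-1/2) (graph without isolated vertices).\<close>
definition nlap_mat :: "'v graph \<Rightarrow> real mat" where
  "nlap_mat G = (let xs = vlist (fst G); n = length xs in
     mat n n (\<lambda>(i, j). if i = j then 1
        else if {xs ! i, xs ! j} \<in> snd G
             then - 1 / sqrt (real (degree G (xs ! i)) * real (degree G (xs ! j)))
             else 0))"

text \<open>Multiset of normalized Laplacian eigenvalues (roots of the characteristic polynomial,
  with multiplicity; the matrix is real symmetric so all eigenvalues are real).\<close>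
definition nlap_spec :: "'v graph \<Rightarrow> real multiset" where
  "nlap_spec G = proots (char_poly (nlap_mat G))"

definition gcubic :: "real \<Rightarrow> real poly" where
  "gcubic x = [: -x, 9, -12, 4 :]"

text \<open>g_1(U) \<union> g_2(U) \<union> g_3(U): all three roots (with multiplicity) of the cubic for each x in U.\<close>
definition g_all :: "real multiset \<Rightarrow> real multiset" where
  "g_all U = sum_mset (image_mset (\<lambda>x. proots (gcubic x)) U)"

end

theory Submission
  imports Defs
begin

definition matL :: "'v list \<Rightarrow> 'w list \<Rightarrow> ('v \<Rightarrow> 'w \<Rightarrow> 'b) \<Rightarrow> 'b mat" where
  "matL xs ys g = mat (length xs) (length ys) (\<lambda>(i,j). g (xs!i) (ys!j))"

lemma matL_carrier[simp]: "matL xs ys g \<in> carrier_mat (length xs) (length ys)"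
  by (simp add: matL_def)

lemma matL_dims[simp]: "dim_row (matL xs ys g) = length xs" "dim_col (matL xs ys g) = length ys"
  by (simp_all add: matL_def)

lemma matL_index[simp]: "i < length xs \<Longrightarrow> j < length ys \<Longrightarrow> matL xs ys g $$ (i,j) = g (xs!i) (ys!j)"
  by (simp add: matL_def)

lemma sum_distinct_nth:
  assumes "distinct ys"
  shows "(\<Sum>l<length ys. F (ys!l)) = (\<Sum>y\<in>set ys. F y)"
proof -
  have "set ys = (!) ys ` {..<length ys}" by (auto simp: set_conv_nth)
  moreover have "inj_on ((!) ys) {..<length ys}" using assms by (simp add: inj_on_nth)
  ultimately show ?thesis by (simp add: sum.reindex)
qed

lemma matL_mult:
  assumes "distinct ys"
  shows "matL xs ys g * matL ys zs h = matL xs zs (\<lambda>x z. \<Sum>y\<in>set ys. g x y * h y z)"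
proof (rule eq_matI)
  fix i j assume i: "i < dim_row (matL xs zs (\<lambda>x z. \<Sum>y\<in>set ys. g x y * h y z))"
    and j: "j < dim_col (matL xs zs (\<lambda>x z. \<Sum>y\<in>set ys. g x y * h y z))"
  then have i': "i < length xs" and j': "j < length zs" by auto
  have "(matL xs ys g * matL ys zs h) $$ (i,j) = row (matL xs ys g) i \<bullet> col (matL ys zs h) j"
    using i' j' by simp
  also have "\<dots> = (\<Sum>l<length ys. g (xs!i) (ys!l) * h (ys!l) (zs!j))"
    using i' j' by (simp add: scalar_prod_def atLeast0LessThan)
  also have "\<dots> = (\<Sum>y\<in>set ys. g (xs!i) y * h y (zs!j))"
    by (rule sum_distinct_nth[OF assms])
  finally show "(matL xs ys g * matL ys zs h) $$ (i,j) = matL xs zs (\<lambda>x z. \<Sum>y\<in>set ys. g x y * h y z) $$ (i,j)"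
    using i' j' by simp
qed auto

lemma matL_mult_vec:
  assumes "distinct ys"
  shows "matL xs ys g *\<^sub>v vec (length ys) (\<lambda>l. h (ys!l)) = vec (length xs) (\<lambda>i. \<Sum>y\<in>set ys. g (xs!i) y * h y)"
proof (rule eq_vecI)
  fix i assume "i < dim_vec (vec (length xs) (\<lambda>i. \<Sum>y\<in>set ys. g (xs!i) y * h y))"
  then have i: "i < length xs" by simp
  have "(matL xs ys g *\<^sub>v vec (length ys) (\<lambda>l. h (ys!l))) $ i = (\<Sum>l<length ys. g (xs!i) (ys!l) * h (ys!l))"
    using i by (simp add: scalar_prod_def atLeast0LessThan)
  also have "\<dots> = (\<Sum>y\<in>set ys. g (xs!i) y * h y)" by (rule sum_distinct_nth[OF assms])
  finally show "(matL xs ys g *\<^sub>v vec (length ys) (\<lambda>l. h (ys!l))) $ i = vec (length xs) (\<lambda>i. \<Sum>y\<in>set ys. g (xs!i) y * h y) $ i"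
    using i by simp
qed simp

lemma matL_append:
  "matL (xs@ys) (xs@ys) g = four_block_mat (matL xs xs g) (matL xs ys g) (matL ys xs g) (matL ys ys g)"
  by (rule eq_matI) (auto simp: matL_def nth_append)

lemma matL_minus: "matL xs ys g - matL xs ys h = matL xs ys (\<lambda>x y. g x y - h x y)"
  by (rule eq_matI) auto

lemma matL_smult: "c \<cdot>\<^sub>m matL xs ys g = matL xs ys (\<lambda>x y. c * g x y)"
  by (rule eq_matI) auto

lemma matL_cong: "(\<And>x y. x \<in> set xs \<Longrightarrow> y \<in> set ys \<Longrightarrow> g x y = h x y) \<Longrightarrow> matL xs ys g = matL xs ys h"
  by (rule eq_matI) auto

lemma matL_diag:
  fixes c :: "'a :: comm_ring_1"
  assumes "distinct xs"
  shows "matL xs xs (\<lambda>x y. if x = y then c else 0) = c \<cdot>\<^sub>m 1\<^sub>m (length xs)"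
  by (rule eq_matI) (use assms in \<open>auto simp: nth_eq_iff_index_eq\<close>)

lemma matL_id:
  assumes "distinct xs"
  shows "matL xs xs (\<lambda>x y. if x = y then 1 else 0) = 1\<^sub>m (length xs)"
  by (rule eq_matI) (use assms in \<open>auto simp: nth_eq_iff_index_eq\<close>)

lemma sum_ind_left:
  fixes f :: "'v \<Rightarrow> 'a :: comm_ring_1"
  assumes "finite S" "x \<in> S" shows "(\<Sum>y\<in>S. (if x = y then 1 else 0) * f y) = f x"
proof -
  have "(\<Sum>y\<in>S. (if x = y then 1 else 0) * f y) = (\<Sum>y\<in>S. if x = y then f y else 0)"
    by (rule sum.cong) auto
  also have "\<dots> = f x" using assms by (simp add: sum.delta)
  finally show ?thesis .
qed

lemma sum_ind_right:
  fixes f :: "'v \<Rightarrow> 'a :: comm_ring_1"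
  assumes "finite S" "z \<in> S" shows "(\<Sum>y\<in>S. f y * (if y = z then 1 else 0)) = f z"
proof -
  have "(\<Sum>y\<in>S. f y * (if y = z then 1 else 0)) = (\<Sum>y\<in>S. if z = y then f y else 0)"
    by (rule sum.cong) auto
  also have "\<dots> = f z" using assms by (simp add: sum.delta)
  finally show ?thesis .
qed

lemma matL_det_perm:
  fixes g :: "'v \<Rightarrow> 'v \<Rightarrow> 'a :: comm_ring_1"
  assumes dx: "distinct xs" and dy: "distinct ys" and s: "set xs = set ys"
  shows "det (matL xs xs g) = det (matL ys ys g)"
proof -
  have len: "length xs = length ys" using dx dy s distinct_card by metis
  define P where "P = matL xs ys (\<lambda>x y. if x = y then (1::'a) else 0)"
  define Q where "Q = matL ys xs (\<lambda>x y. if x = y then (1::'a) else 0)"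
  have PQ: "P * Q = 1\<^sub>m (length xs)"
  proof -
    have "P * Q = matL xs xs (\<lambda>x z. \<Sum>y\<in>set ys. (if x = y then (1::'a) else 0) * (if y = z then 1 else 0))"
      unfolding P_def Q_def by (rule matL_mult[OF dy])
    also have "\<dots> = matL xs xs (\<lambda>x z. if x = z then 1 else 0)"
    proof (rule matL_cong)
      fix x z assume x: "x \<in> set xs" and z: "z \<in> set xs"
      have "(\<Sum>y\<in>set ys. (if x = y then (1::'a) else 0) * (if y = z then 1 else 0))
          = (\<Sum>y\<in>set ys. if x = y then (if y = z then 1 else 0) else 0)"
        by (rule sum.cong) auto
      also have "\<dots> = (if x = z then 1 else 0)" using x s by (simp add: sum.delta)
      finally show "(\<Sum>y\<in>set ys. (if x = y then (1::'a) else 0) * (if y = z then 1 else 0)) = (if x = z then 1 else 0)" .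
    qed
    also have "\<dots> = 1\<^sub>m (length xs)" by (rule matL_id[OF dx])
    finally show ?thesis .
  qed
  have PG: "P * matL ys ys g = matL xs ys g"
    unfolding P_def matL_mult[OF dy]
    by (rule matL_cong) (simp add: s sum_ind_left)
  have GQ: "matL xs ys g * Q = matL xs xs g"
    unfolding Q_def matL_mult[OF dy]
    by (rule matL_cong) (simp add: s sum_ind_right)
  have P: "P \<in> carrier_mat (length xs) (length xs)" unfolding P_def by (metis len matL_carrier)
  have Q: "Q \<in> carrier_mat (length xs) (length xs)" unfolding Q_def by (metis len matL_carrier)
  have G: "matL ys ys g \<in> carrier_mat (length xs) (length xs)" by (metis len matL_carrier)
  have "det P * det Q = 1" using det_mult[OF P Q] PQ by simp
  have "det (matL xs xs g) = det (P * matL ys ys g * Q)" using PG GQ by simp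
  also have "\<dots> = det P * det (matL ys ys g) * det Q"
    using det_mult[OF mult_carrier_mat[OF P G] Q] det_mult[OF P G] by simp
  also have "\<dots> = (det P * det Q) * det (matL ys ys g)" by (simp add: ac_simps)
  also have "\<dots> = det (matL ys ys g)" using \<open>det P * det Q = 1\<close> by simp
  finally show ?thesis .
qed

lemma schur_det:
  fixes A :: "'a :: idom mat"
  assumes A: "A \<in> carrier_mat n n" and B: "B \<in> carrier_mat n m" and C: "C \<in> carrier_mat m n"
    and D: "D \<in> carrier_mat m m" and Y: "Y \<in> carrier_mat m n" and DY: "D * Y = C"
  shows "det (four_block_mat A B C D) = det (A - B * Y) * det D"
proof -
  define Q where "Q = four_block_mat (1\<^sub>m n) (0\<^sub>m n m) (- Y) (1\<^sub>m m)"
  have Qc: "Q \<in> carrier_mat (n+m) (n+m)" unfolding Q_def using Y by auto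
  have Mc: "four_block_mat A B C D \<in> carrier_mat (n+m) (n+m)" using A B C D by auto
  have dQ: "det Q = 1" unfolding Q_def
    by (subst det_four_block_mat_upper_right_zero[of _ n _ m]) (use Y in auto)
  have "four_block_mat A B C D * Q = four_block_mat (A * 1\<^sub>m n + B * (- Y)) (A * 0\<^sub>m n m + B * 1\<^sub>m m)
          (C * 1\<^sub>m n + D * (- Y)) (C * 0\<^sub>m n m + D * 1\<^sub>m m)"
    unfolding Q_def by (rule mult_four_block_mat[OF A B C D]) (use Y in auto)
  also have "A * 1\<^sub>m n + B * (- Y) = A - B * Y" using A B Y by (auto simp: minus_add_uminus_mat)
  also have "A * 0\<^sub>m n m + B * 1\<^sub>m m = B" using A B by simp
  also have "C * 1\<^sub>m n + D * (- Y) = 0\<^sub>m m n" using C D Y DY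
  proof -
    have "D * (- Y) = - C" using uminus_mult_right_mat[of D Y] D Y DY by simp
    moreover have "C * 1\<^sub>m n = C" using C by simp
    moreover have "C + - C = 0\<^sub>m m n" by (rule eq_matI) (use C in auto)
    ultimately show ?thesis by simp
  qed
  also have "C * 0\<^sub>m n m + D * 1\<^sub>m m = D" using C D by simp
  finally have MQ: "four_block_mat A B C D * Q = four_block_mat (A - B * Y) B (0\<^sub>m m n) D" .
  have "det (four_block_mat A B C D) = det (four_block_mat A B C D * Q)"
    using det_mult[OF Mc Qc] dQ by simp
  also have "\<dots> = det (A - B * Y) * det D" unfolding MQ
    by (rule det_four_block_mat_lower_left_zero) (use A B Y D in auto)
  finally show ?thesis .
qed


definition fpoly :: "real poly" where "fpoly = [:0, 9, -12, 4:]"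

lemma gcubic_fpoly: "gcubic x = fpoly - [:x:]"
  by (simp add: gcubic_def fpoly_def)

lemma gcubic_nz: "gcubic x \<noteq> 0"
  by (simp add: gcubic_def)

lemma degree_fpoly: "Polynomial.degree fpoly = 3"
  by (simp add: fpoly_def)

lemma g_all_empty[simp]: "g_all {#} = {#}" by (simp add: g_all_def)
lemma g_all_plus: "g_all (A + B) = g_all A + g_all B" by (simp add: g_all_def)
lemma g_all_single: "g_all {#x#} = proots (gcubic x)" by (simp add: g_all_def)
lemma g_all_add: "g_all (add_mset x A) = proots (gcubic x) + g_all A" by (simp add: g_all_def)

lemma proots_pcompose:
  fixes p :: "real poly"
  shows "p \<noteq> 0 \<Longrightarrow> proots (p \<circ>\<^sub>p fpoly) = g_all (proots p)"
proof (induction "Polynomial.degree p" arbitrary: p rule: less_induct)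
  case less
  show ?case
  proof (cases "\<exists>a. poly p a = 0")
    case True
    then obtain a where a: "poly p a = 0" by blast
    then obtain q where pq: "p = [:-a, 1:] * q" using poly_eq_0_iff_dvd by (metis dvdE)
    have q0: "q \<noteq> 0" using less.prems pq by auto
    have dq: "Polynomial.degree q < Polynomial.degree p"
      by (subst pq, subst degree_mult_eq) (use q0 in auto)
    have IH: "proots (q \<circ>\<^sub>p fpoly) = g_all (proots q)" using less.hyps dq q0 by blast
    have lin: "[:-a, 1:] \<circ>\<^sub>p fpoly = gcubic a"
      by (simp add: gcubic_def fpoly_def pcompose_pCons)
    have qf0: "q \<circ>\<^sub>p fpoly \<noteq> 0" using q0 pcompose_eq_0_iff[of fpoly q] degree_fpoly by simp
    have "p \<circ>\<^sub>p fpoly = ([:-a, 1:] \<circ>\<^sub>p fpoly) * (q \<circ>\<^sub>p fpoly)"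
      by (simp only: pq pcompose_mult)
    then have "proots (p \<circ>\<^sub>p fpoly) = proots (gcubic a * (q \<circ>\<^sub>p fpoly))"
      by (simp only: lin)
    also have "\<dots> = proots (gcubic a) + proots (q \<circ>\<^sub>p fpoly)"
      using gcubic_nz qf0 by (simp add: proots_mult)
    also have "\<dots> = g_all (proots p)"
    proof -
      have lf: "proots [:-a, 1:] = {#a#}" using proots_linear_factor[of "-a"] by simp
      have "proots p = {#a#} + proots q"
        by (subst pq, subst proots_mult) (use q0 lf in auto)
      then show ?thesis using IH by (simp add: g_all_add)
    qed
    finally show ?thesis .
  next
    case False
    have pf0: "p \<circ>\<^sub>p fpoly \<noteq> 0" using less.prems pcompose_eq_0_iff[of fpoly p] degree_fpoly by simp
    have e1: "proots p = {#}"
      using set_count_proots[OF less.prems] False by auto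
    have "set_mset (proots (p \<circ>\<^sub>p fpoly)) = {}"
      using set_count_proots[OF pf0] False by (auto simp: poly_pcompose)
    then show ?thesis using e1 by simp
  qed
qed

lemma proots3: "proots ([:-a, 1:] * [:-b, 1:] * [:-c, 1:]) = {#a, b, c#}"
  apply (subst proots_mult, simp, simp)+
  apply (simp add: proots_linear_factor[of "-a", simplified] proots_linear_factor[of "-b", simplified]
     proots_linear_factor[of "-c", simplified])
  done

lemma gcubic0: "proots (gcubic 0) = {#0, 3/2, 3/2#}"
proof -
  have "proots (gcubic 0) = proots (Polynomial.smult 4 ([:-(0), 1:] * [:-(3/2), 1:] * [:-(3/2), 1:]))"
    by (simp add: gcubic_def)
  also have "\<dots> = proots ([:-(0), 1:] * [:-(3/2), 1:] * [:-(3/2::real), 1:])"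
    by (rule proots_smult) simp
  also have "\<dots> = {#0, 3/2, 3/2#}" by (rule proots3)
  finally show ?thesis .
qed

lemma gcubic2: "proots (gcubic 2) = {#2, 1/2, 1/2#}"
proof -
  have "proots (gcubic 2) = proots (Polynomial.smult 4 ([:-(2), 1:] * [:-(1/2), 1:] * [:-(1/2), 1:]))"
    by (simp add: gcubic_def)
  also have "\<dots> = proots ([:-(2), 1:] * [:-(1/2), 1:] * [:-(1/2::real), 1:])"
    by (rule proots_smult) simp
  also have "\<dots> = {#2, 1/2, 1/2#}" by (rule proots3)
  finally show ?thesis .
qed

lemma poly_eq_cofinite:
  fixes p q :: "real poly"
  assumes "finite F" and "\<And>x. x \<notin> F \<Longrightarrow> poly p x = poly q x"
  shows "p = q"
proof (rule ccontr)
  assume "p \<noteq> q"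
  then have "p - q \<noteq> 0" by simp
  then have "finite {x. poly (p - q) x = 0}" by (rule poly_roots_finite)
  moreover have "- F \<subseteq> {x. poly (p - q) x = 0}" using assms(2) by auto
  ultimately have "finite (- F)" by (rule finite_subset[rotated])
  with assms(1) have "finite (UNIV :: real set)" by (metis finite_Un Compl_partition2) 
  then show False by (simp add: infinite_UNIV_char_0)
qed


definition nl :: "'v graph \<Rightarrow> 'v \<Rightarrow> 'v \<Rightarrow> real" where
  "nl G x y = (if x = y then 1 else if {x,y} \<in> snd G
      then - 1 / sqrt (real (degree G x) * real (degree G y)) else 0)"

definition chf :: "'v graph \<Rightarrow> real \<Rightarrow> 'v \<Rightarrow> 'v \<Rightarrow> real" where
  "chf G z x y = (if x = y then z else 0) - nl G x y"

lemma vlist: "finite V \<Longrightarrow> distinct (vlist V) \<and> set (vlist V) = V"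
proof -
  assume "finite V"
  then obtain xs where "distinct xs \<and> set xs = V" using finite_distinct_list by metis
  then show ?thesis unfolding vlist_def by (rule someI)
qed

lemma nlap_mat_matL:
  assumes "finite (fst G)"
  shows "nlap_mat G = matL (vlist (fst G)) (vlist (fst G)) (nl G)"
proof -
  have d: "distinct (vlist (fst G))" using vlist[OF assms] by blast
  show ?thesis unfolding nlap_mat_def Let_def
    by (rule eq_matI) (use d in \<open>auto simp: nl_def nth_eq_iff_index_eq\<close>)
qed

lemma char_eval:
  assumes "finite (fst G)" and "distinct xs" and "set xs = fst G"
  shows "poly (char_poly (nlap_mat G)) z = det (matL xs xs (chf G z))"
proof -
  let ?ys = "vlist (fst G)"
  have ys: "distinct ?ys" "set ?ys = fst G" using vlist[OF assms(1)] by auto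
  have A: "nlap_mat G \<in> carrier_mat (length ?ys) (length ?ys)"
    unfolding nlap_mat_matL[OF assms(1)] by simp
  have "poly (char_poly (nlap_mat G)) z = det (- char_matrix (nlap_mat G) z)"
    by (rule char_poly_matrix[OF A])
  also have "- char_matrix (nlap_mat G) z = matL ?ys ?ys (chf G z)"
    unfolding nlap_mat_matL[OF assms(1)] char_matrix_def
    by (rule eq_matI) (use ys in \<open>auto simp: chf_def nth_eq_iff_index_eq\<close>)
  also have "det (matL ?ys ?ys (chf G z)) = det (matL xs xs (chf G z))"
    by (rule matL_det_perm) (use ys assms in auto)
  finally show ?thesis .
qed

lemma char_poly_nz: "char_poly (nlap_mat G) \<noteq> 0"
proof -
  have "nlap_mat G \<in> carrier_mat (length (vlist (fst G))) (length (vlist (fst G)))"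
    unfolding nlap_mat_def Let_def by simp
  from degree_monic_char_poly[OF this] show ?thesis by auto
qed

definition nbr :: "'v graph \<Rightarrow> 'v \<Rightarrow> 'v set" where
  "nbr G x = {y. {x,y} \<in> snd G}"

lemma card2_doubleton: "card e = 2 \<Longrightarrow> x \<in> e \<Longrightarrow> \<exists>y. y \<noteq> x \<and> e = {x,y}"
proof -
  assume "card e = 2" "x \<in> e"
  then obtain a b where ab: "e = {a,b}" "a \<noteq> b" by (meson card_2_iff)
  show ?thesis
  proof (cases "x = a")
    case True then show ?thesis using ab by (intro exI[of _ b]) auto
  next
    case False then have "x = b" using ab \<open>x \<in> e\<close> by blast
    then show ?thesis using ab by (intro exI[of _ a]) auto
  qed
qed

lemma edge_neq: "simple_graph G \<Longrightarrow> {x,y} \<in> snd G \<Longrightarrow> x \<noteq> y"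
proof
  assume "simple_graph G" "{x,y} \<in> snd G" "x = y"
  then have "card {x,y} = 2" unfolding simple_graph_def by blast
  with \<open>x = y\<close> show False by simp
qed

lemma edge_in: "simple_graph G \<Longrightarrow> {x,y} \<in> snd G \<Longrightarrow> x \<in> fst G \<and> y \<in> fst G"
  unfolding simple_graph_def by blast

lemma nbr_sub: "simple_graph G \<Longrightarrow> nbr G x \<subseteq> fst G - {x}"
proof
  fix y assume sg: "simple_graph G" and "y \<in> nbr G x"
  then have e: "{x,y} \<in> snd G" by (simp add: nbr_def)
  show "y \<in> fst G - {x}" using edge_neq[OF sg e] edge_in[OF sg e] by blast
qed

lemma degree_nbr:
  assumes sg: "simple_graph G"
  shows "degree G x = card (nbr G x)"
proof -
  have "bij_betw (\<lambda>y. {x,y}) (nbr G x) {e \<in> snd G. x \<in> e}"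
  proof (rule bij_betwI')
    fix y y' assume y: "y \<in> nbr G x" and y': "y' \<in> nbr G x"
    have "y \<noteq> x" "y' \<noteq> x" using y y' nbr_sub[OF sg] by auto
    then show "({x, y} = {x, y'}) = (y = y')" by (auto simp: doubleton_eq_iff)
  next
    fix y assume "y \<in> nbr G x" then show "{x, y} \<in> {e \<in> snd G. x \<in> e}" by (simp add: nbr_def)
  next
    fix e assume e: "e \<in> {e \<in> snd G. x \<in> e}"
    then have eE: "e \<in> snd G" and xe: "x \<in> e" by simp_all
    have "card e = 2" using sg eE unfolding simple_graph_def by blast
    then obtain y where y: "e = {x,y}" using card2_doubleton[OF _ xe] by blast
    then have "y \<in> nbr G x" using eE by (simp add: nbr_def)
    then show "\<exists>y\<in>nbr G x. e = {x, y}" using y by blast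
  qed
  then show ?thesis unfolding degree_def by (simp add: bij_betw_same_card)
qed

lemma nbr_finite: "simple_graph G \<Longrightarrow> finite (nbr G x)"
  using nbr_sub[of G x] unfolding simple_graph_def by (meson finite_Diff finite_subset)

lemma nl_split:
  assumes "simple_graph G" and "x \<in> fst G"
  shows "(\<Sum>y\<in>fst G. nl G x y * h y) = h x - (\<Sum>y\<in>nbr G x. h y / sqrt (real (degree G x) * real (degree G y)))"
proof -
  have fin: "finite (fst G)" using assms by (simp add: simple_graph_def)
  have ns: "nbr G x \<subseteq> fst G - {x}" by (rule nbr_sub[OF assms(1)])
  have "(\<Sum>y\<in>fst G. nl G x y * h y) = nl G x x * h x + (\<Sum>y\<in>fst G - {x}. nl G x y * h y)"
    using fin assms(2) by (simp add: sum.remove)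
  also have "(\<Sum>y\<in>fst G - {x}. nl G x y * h y) = (\<Sum>y\<in>nbr G x. nl G x y * h y)"
    by (rule sum.mono_neutral_right) (use fin ns in \<open>auto simp: nl_def nbr_def\<close>)
  also have "\<dots> = - (\<Sum>y\<in>nbr G x. h y / sqrt (real (degree G x) * real (degree G y)))"
    by (subst sum_negf[symmetric], rule sum.cong) (use ns in \<open>auto simp: nl_def nbr_def\<close>)
  finally show ?thesis by (simp add: nl_def)
qed

lemma eigen_sign:
  assumes sg: "simple_graph G" and ne: "fst G \<noteq> {}"
    and deg: "\<And>x. x \<in> fst G \<Longrightarrow> degree G x > 0"
    and s: "\<And>x. s x = 1 \<or> s x = -1"
    and sE: "\<And>x y. {x,y} \<in> snd G \<Longrightarrow> s y = \<sigma> * s x"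
  shows "poly (char_poly (nlap_mat G)) (1 - \<sigma>) = 0"
proof -
  have fin: "finite (fst G)" using sg by (simp add: simple_graph_def)
  define xs where "xs = vlist (fst G)"
  have xs: "distinct xs" "set xs = fst G" using vlist[OF fin] xs_def by auto
  define h where "h y = s y * sqrt (real (degree G y))" for y
  define A where "A = nlap_mat G"
  have A: "A = matL xs xs (nl G)" unfolding A_def xs_def by (rule nlap_mat_matL[OF fin])
  define v where "v = vec (length xs) (\<lambda>l. h (xs!l))"
  have key: "(\<Sum>y\<in>fst G. nl G x y * h y) = (1 - \<sigma>) * h x" if x: "x \<in> fst G" for x
  proof -
    have dx: "real (degree G x) > 0" using deg x by simp
    have "(\<Sum>y\<in>nbr G x. h y / sqrt (real (degree G x) * real (degree G y)))
        = (\<Sum>y\<in>nbr G x. \<sigma> * s x / sqrt (real (degree G x)))"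
    proof (rule sum.cong)
      fix y assume y: "y \<in> nbr G x"
      then have yV: "y \<in> fst G" using nbr_sub[OF sg] by blast
      have dy: "real (degree G y) > 0" using deg yV by simp
      have sy: "s y = \<sigma> * s x" using sE y by (auto simp: nbr_def)
      show "h y / sqrt (real (degree G x) * real (degree G y)) = \<sigma> * s x / sqrt (real (degree G x))"
        using dx dy sy by (simp add: h_def real_sqrt_mult field_simps)
    qed simp
    also have "\<dots> = real (degree G x) * (\<sigma> * s x / sqrt (real (degree G x)))"
      using degree_nbr[OF sg, of x] by simp
    also have "\<dots> = \<sigma> * h x" using dx
      by (simp add: h_def field_simps)
    finally show ?thesis using nl_split[OF sg x, of h] by (simp add: algebra_simps)
  qed
  have Av: "A *\<^sub>v v = (1 - \<sigma>) \<cdot>\<^sub>v v"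
  proof (rule eq_vecI)
    fix i assume "i < dim_vec ((1 - \<sigma>) \<cdot>\<^sub>v v)"
    then have i: "i < length xs" by (simp add: v_def)
    have "xs ! i \<in> fst G" using i xs(2) nth_mem by blast
    then show "(A *\<^sub>v v) $ i = ((1 - \<sigma>) \<cdot>\<^sub>v v) $ i"
      unfolding A v_def matL_mult_vec[OF xs(1)] using i key xs(2) by simp
  qed (simp add: A v_def)
  obtain x where x: "x \<in> fst G" using ne by blast
  then obtain l where l: "l < length xs" "xs ! l = x" using xs by (metis in_set_conv_nth)
  have "h x \<noteq> 0" using s[of x] deg[OF x] by (auto simp: h_def)
  then have "v \<noteq> 0\<^sub>v (length xs)" using l unfolding v_def by (metis index_vec index_zero_vec(1))
  then have "eigenvector A v (1 - \<sigma>)" unfolding eigenvector_def using Av A by (simp add: v_def)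
  then have "eigenvalue A (1 - \<sigma>)" unfolding eigenvalue_def by blast
  moreover have "A \<in> carrier_mat (length xs) (length xs)" using A by simp
  ultimately show ?thesis using eigenvalue_root_char_poly[of A "length xs" "1 - \<sigma>"] A_def by simp
qed

lemma spec_zero:
  assumes "simple_graph G" "fst G \<noteq> {}" "\<And>x. x \<in> fst G \<Longrightarrow> degree G x > 0"
  shows "0 \<in># nlap_spec G"
proof -
  have "poly (char_poly (nlap_mat G)) (1 - 1) = 0"
    by (rule eigen_sign[of G "\<lambda>_. 1"]) (use assms in auto)
  then show ?thesis unfolding nlap_spec_def by (simp add: set_count_proots[OF char_poly_nz])
qed

lemma card_one_xor: "x \<noteq> y \<Longrightarrow> card ({x,y} \<inter> A) = 1 \<Longrightarrow> (x \<in> A) \<noteq> (y \<in> A)"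
  by (cases "x \<in> A"; cases "y \<in> A") auto

lemma spec_two:
  assumes "simple_graph G" "fst G \<noteq> {}" "\<And>x. x \<in> fst G \<Longrightarrow> degree G x > 0"
    and "bipartite_graph G"
  shows "2 \<in># nlap_spec G"
proof -
  obtain A where A: "\<And>e. e \<in> snd G \<Longrightarrow> card (e \<inter> A) = 1" using assms(4) by (auto simp: bipartite_graph_def)
  define s where "s x = (if x \<in> A then (1::real) else -1)" for x
  have "poly (char_poly (nlap_mat G)) (1 - (-1)) = 0"
  proof (rule eigen_sign[of G s])
    fix x y assume e: "{x,y} \<in> snd G"
    have "x \<noteq> y" using edge_neq[OF assms(1) e] .
    then have "(x \<in> A) \<noteq> (y \<in> A)" using card_one_xor A[OF e] by metis
    then show "s y = - 1 * s x" by (auto simp: s_def)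
  next
    fix x show "s x = 1 \<or> s x = -1" by (simp add: s_def)
  qed (use assms(1,2,3) in \<open>simp_all\<close>)
  then show ?thesis unfolding nlap_spec_def by (simp add: set_count_proots[OF char_poly_nz])
qed


fun mfst :: "'a svert \<Rightarrow> 'a svert" where
  "mfst (Mid a b i) = a" | "mfst (Base x) = Base x"
fun msnd :: "'a svert \<Rightarrow> 'a svert" where
  "msnd (Mid a b i) = b" | "msnd (Base x) = Base x"
fun partner :: "'a svert \<Rightarrow> 'a svert" where
  "partner (Mid a b i) = Mid b a i" | "partner (Base x) = Base x"

lemma partner_partner[simp]: "partner (partner w) = w" by (cases w) auto
lemma mfst_partner[simp]: "mfst (partner w) = msnd w" by (cases w) auto
lemma msnd_partner[simp]: "msnd (partner w) = mfst w" by (cases w) auto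
lemma partner_inj: "partner w = partner w' \<longleftrightarrow> w = w'" by (metis partner_partner)

lemma card_doubleton: "x \<noteq> y \<Longrightarrow> card {x,y} = 2" by simp

locale subd =
  fixes V :: "'a svert set" and E :: "'a svert set set" and k :: nat
  assumes sg: "simple_graph (V, E)"
    and degpos: "\<And>x. x \<in> V \<Longrightarrow> degree (V,E) x > 0"
    and fresh: "\<And>a b i. {a,b} \<in> E \<Longrightarrow> Mid a b i \<notin> V"
    and kpos: "k \<ge> 1"
begin

definition W :: "'a svert set" where "W = {Mid u v i | u v i. {u,v} \<in> E \<and> i < k}"

lemma finV: "finite V" using sg by (simp add: simple_graph_def)
lemma EV: "e \<in> E \<Longrightarrow> e \<subseteq> V" using sg by (simp add: simple_graph_def)
lemma Ecard: "e \<in> E \<Longrightarrow> card e = 2" using sg by (simp add: simple_graph_def)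
lemma finE: "finite E"
proof -
  have "E \<subseteq> Pow V" using EV by blast
  then show ?thesis using finV by (meson finite_Pow_iff finite_subset)
qed
lemma eV: "{a,b} \<in> E \<Longrightarrow> a \<in> V \<and> b \<in> V" using edge_in[OF sg] by simp
lemma eneq: "{a,b} \<in> E \<Longrightarrow> a \<noteq> b" using edge_neq[OF sg] by simp
lemma esym: "{a,b} \<in> E \<Longrightarrow> {b,a} \<in> E" by (simp add: insert_commute)

lemma fstS: "fst (S2k k (V,E)) = V \<union> W" by (simp add: S2k_def W_def)

lemma sndS_iff: "e \<in> snd (S2k k (V,E)) \<longleftrightarrow>
   (\<exists>a b i. {a,b} \<in> E \<and> i < k \<and> (e = {a, Mid a b i} \<or> e = {Mid a b i, Mid b a i}))"
  unfolding S2k_def by auto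

lemma W_iff: "w \<in> W \<longleftrightarrow> (\<exists>a b i. w = Mid a b i \<and> {a,b} \<in> E \<and> i < k)"
  unfolding W_def by auto

lemma W_E: assumes "w \<in> W" obtains i where "w = Mid (mfst w) (msnd w) i" "{mfst w, msnd w} \<in> E" "i < k"
  using assms unfolding W_iff by auto

lemma W_mfst: "w \<in> W \<Longrightarrow> mfst w \<in> V" by (metis W_E eV)
lemma W_msnd: "w \<in> W \<Longrightarrow> msnd w \<in> V" by (metis W_E eV)
lemma W_neq: "w \<in> W \<Longrightarrow> mfst w \<noteq> msnd w" by (metis W_E eneq)
lemma W_notV: "w \<in> W \<Longrightarrow> w \<notin> V" by (metis W_E fresh)
lemma Mid_W: "{a,b} \<in> E \<Longrightarrow> i < k \<Longrightarrow> Mid a b i \<in> W" unfolding W_iff by blast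
lemma partner_W: "w \<in> W \<Longrightarrow> partner w \<in> W"
proof -
  assume w: "w \<in> W"
  then obtain i where i: "w = Mid (mfst w) (msnd w) i" "{mfst w, msnd w} \<in> E" "i < k" by (rule W_E)
  then have "partner w = Mid (msnd w) (mfst w) i" by (metis partner.simps(1))
  then show ?thesis using i esym Mid_W by metis
qed
lemma partner_neq: "w \<in> W \<Longrightarrow> partner w \<noteq> w" by (metis W_neq mfst_partner msnd_partner)

lemma adj_VV: assumes "u \<in> V" "v \<in> V" shows "{u,v} \<notin> snd (S2k k (V,E))"
proof
  assume "{u,v} \<in> snd (S2k k (V,E))"
  then obtain a b i where ab: "{a,b} \<in> E" "i < k" and e: "{u,v} = {a, Mid a b i} \<or> {u,v} = {Mid a b i, Mid b a i}"
    unfolding sndS_iff by blast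
  have "Mid a b i \<in> {u,v}" using e by blast
  then have "Mid a b i \<in> V" using assms by blast
  then show False using fresh[OF ab(1)] by blast
qed

lemma adj_VW: assumes u: "u \<in> V" and w: "w \<in> W" shows "{u,w} \<in> snd (S2k k (V,E)) \<longleftrightarrow> u = mfst w"
proof
  assume "{u,w} \<in> snd (S2k k (V,E))"
  then obtain a b i where ab: "{a,b} \<in> E" "i < k" and e: "{u,w} = {a, Mid a b i} \<or> {u,w} = {Mid a b i, Mid b a i}"
    unfolding sndS_iff by blast
  have n1: "Mid a b i \<notin> V" "Mid b a i \<notin> V" using fresh ab esym by blast+
  show "u = mfst w"
  proof (cases "{u,w} = {a, Mid a b i}")
    case True
    then have "u = a \<and> w = Mid a b i" using u n1 by (auto simp: doubleton_eq_iff)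
    then show ?thesis by simp
  next
    case False
    then have "{u,w} = {Mid a b i, Mid b a i}" using e by blast
    then have "u \<in> {Mid a b i, Mid b a i}" by blast
    then show ?thesis using u n1 by blast
  qed
next
  assume "u = mfst w"
  moreover obtain i where i: "w = Mid (mfst w) (msnd w) i" "{mfst w, msnd w} \<in> E" "i < k" using w by (rule W_E)
  ultimately show "{u,w} \<in> snd (S2k k (V,E))" unfolding sndS_iff by metis
qed

lemma adj_WW: assumes w: "w \<in> W" and w': "w' \<in> W" shows "{w,w'} \<in> snd (S2k k (V,E)) \<longleftrightarrow> w' = partner w"
proof
  assume "{w,w'} \<in> snd (S2k k (V,E))"
  then obtain a b i where ab: "{a,b} \<in> E" "i < k" and e: "{w,w'} = {a, Mid a b i} \<or> {w,w'} = {Mid a b i, Mid b a i}"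
    unfolding sndS_iff by blast
  have "a \<in> V" using eV ab by blast
  then have "a \<notin> {w,w'}" using W_notV w w' by blast
  then have e2: "{w,w'} = {Mid a b i, Mid b a i}" using e by blast
  show "w' = partner w"
  proof (cases "w = Mid a b i")
    case True
    then have "w' = Mid b a i" using e2 partner_neq[OF w] by (auto simp: doubleton_eq_iff)
    then show ?thesis using True by simp
  next
    case False
    then have "w = Mid b a i" "w' = Mid a b i" using e2 by (auto simp: doubleton_eq_iff)
    then show ?thesis by simp
  qed
next
  assume p: "w' = partner w"
  obtain i where i: "w = Mid (mfst w) (msnd w) i" "{mfst w, msnd w} \<in> E" "i < k" using w by (rule W_E)
  then have "w' = Mid (msnd w) (mfst w) i" using p by (metis partner.simps(1))
  then show "{w,w'} \<in> snd (S2k k (V,E))" unfolding sndS_iff using i by metis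
qed

lemma finW: "finite W"
proof -
  have "W \<subseteq> (\<lambda>(a,b,i). Mid a b i) ` (V \<times> V \<times> {..<k})"
  proof
    fix w assume "w \<in> W"
    then obtain a b i where "w = Mid a b i" "{a,b} \<in> E" "i < k" unfolding W_iff by blast
    then show "w \<in> (\<lambda>(a,b,i). Mid a b i) ` (V \<times> V \<times> {..<k})" using eV by force
  qed
  then show ?thesis using finV by (meson finite_SigmaI finite_imageI finite_lessThan finite_subset)
qed

lemma simpleS: "simple_graph (S2k k (V,E))"
  unfolding simple_graph_def
proof (intro conjI ballI)
  show "finite (fst (S2k k (V, E)))" unfolding fstS using finV finW by simp
next
  fix e assume "e \<in> snd (S2k k (V, E))"
  then obtain a b i where ab: "{a,b} \<in> E" "i < k" and e: "e = {a, Mid a b i} \<or> e = {Mid a b i, Mid b a i}"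
    unfolding sndS_iff by blast
  have m1: "Mid a b i \<in> W" "Mid b a i \<in> W" using Mid_W ab esym by blast+
  have aV: "a \<in> V" using eV ab by blast
  have n: "a \<noteq> Mid a b i" "Mid a b i \<noteq> Mid b a i" using fresh[OF ab(1)] aV eneq[OF ab(1)] by auto
  show "e \<subseteq> fst (S2k k (V, E))" unfolding fstS using e m1 aV by blast
  show "card e = 2" using e n card_doubleton by metis
qed

lemma nbrS_V: assumes u: "u \<in> V" shows "nbr (S2k k (V,E)) u = {w \<in> W. mfst w = u}"
proof (rule equalityI; rule subsetI)
  fix y assume "y \<in> nbr (S2k k (V,E)) u"
  then have e: "{u,y} \<in> snd (S2k k (V,E))" by (simp add: nbr_def)
  then have "y \<in> V \<union> W" using edge_in[OF simpleS e] fstS by simp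
  moreover have "y \<notin> V" using adj_VV[OF u] e by blast
  ultimately have y: "y \<in> W" by blast
  then show "y \<in> {w \<in> W. mfst w = u}" using adj_VW[OF u y] e by simp
next
  fix y assume "y \<in> {w \<in> W. mfst w = u}"
  then show "y \<in> nbr (S2k k (V,E)) u" using adj_VW[OF u] by (simp add: nbr_def)
qed

lemma nbrS_W: assumes w: "w \<in> W" shows "nbr (S2k k (V,E)) w = {mfst w, partner w}"
proof (rule equalityI; rule subsetI)
  fix y assume "y \<in> nbr (S2k k (V,E)) w"
  then have e: "{w,y} \<in> snd (S2k k (V,E))" by (simp add: nbr_def)
  then have "y \<in> V \<union> W" using edge_in[OF simpleS e] fstS by simp
  then show "y \<in> {mfst w, partner w}"
  proof
    assume y: "y \<in> V"
    have "{y,w} \<in> snd (S2k k (V,E))" using e by (simp add: insert_commute)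
    then show ?thesis using adj_VW[OF y w] by simp
  next
    assume y: "y \<in> W"
    then show ?thesis using adj_WW[OF w y] e by simp
  qed
next
  fix y assume "y \<in> {mfst w, partner w}"
  then show "y \<in> nbr (S2k k (V,E)) w"
  proof
    assume "y = mfst w"
    then have "{y,w} \<in> snd (S2k k (V,E))" using adj_VW[OF W_mfst[OF w] w] by simp
    then show ?thesis by (simp add: nbr_def insert_commute)
  next
    assume "y \<in> {partner w}"
    then show ?thesis using adj_WW[OF w partner_W[OF w]] by (simp add: nbr_def)
  qed
qed

lemma Wu_eq: assumes u: "u \<in> V"
  shows "{w \<in> W. mfst w = u} = (\<lambda>(b,i). Mid u b i) ` (nbr (V,E) u \<times> {..<k})"
proof (rule equalityI; rule subsetI)
  fix w assume "w \<in> {w \<in> W. mfst w = u}"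
  then have w: "w \<in> W" "mfst w = u" by auto
  then obtain i where i: "w = Mid (mfst w) (msnd w) i" "{mfst w, msnd w} \<in> E" "i < k" by (metis W_E)
  then have "msnd w \<in> nbr (V,E) u" using w by (simp add: nbr_def)
  then show "w \<in> (\<lambda>(b,i). Mid u b i) ` (nbr (V,E) u \<times> {..<k})" using i w
    by (intro image_eqI[of _ _ "(msnd w, i)"]) auto
next
  fix w assume "w \<in> (\<lambda>(b,i). Mid u b i) ` (nbr (V,E) u \<times> {..<k})"
  then obtain b i where "w = Mid u b i" "b \<in> nbr (V,E) u" "i < k" by auto
  then show "w \<in> {w \<in> W. mfst w = u}" using Mid_W by (simp add: nbr_def)
qed

lemma Wu_inj: "inj_on (\<lambda>(b,i). Mid u b i) A"
  by (rule inj_onI) auto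

lemma degS_V: assumes u: "u \<in> V" shows "degree (S2k k (V,E)) u = k * degree (V,E) u"
proof -
  have "degree (S2k k (V,E)) u = card {w \<in> W. mfst w = u}"
    using degree_nbr[OF simpleS] nbrS_V[OF u] by simp
  also have "\<dots> = card (nbr (V,E) u \<times> {..<k})" unfolding Wu_eq[OF u] by (rule card_image[OF Wu_inj])
  also have "\<dots> = k * degree (V,E) u" using degree_nbr[OF sg, of u] by (simp add: card_cartesian_product)
  finally show ?thesis .
qed

lemma degS_W: assumes w: "w \<in> W" shows "degree (S2k k (V,E)) w = 2"
proof -
  have "mfst w \<noteq> partner w" using W_mfst[OF w] partner_W[OF w] W_notV by metis
  then show ?thesis using degree_nbr[OF simpleS] nbrS_W[OF w] by simp
qed

end

context subd begin

definition cS :: "'a svert \<Rightarrow> real" where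
  "cS u = 1 / sqrt (real (k * degree (V,E) u) * 2)"

lemma chfS_VV: assumes "u \<in> V" "v \<in> V"
  shows "chf (S2k k (V,E)) z u v = (if u = v then z - 1 else 0)"
  using adj_VV[OF assms] by (simp add: chf_def nl_def)

lemma chfS_VW: assumes u: "u \<in> V" and w: "w \<in> W"
  shows "chf (S2k k (V,E)) z u w = (if u = mfst w then cS u else 0)"
proof -
  have "u \<noteq> w" using u w W_notV by blast
  show ?thesis
  proof (cases "u = mfst w")
    case True
    then have "{u,w} \<in> snd (S2k k (V,E))" using adj_VW[OF u w] by simp
    then have "chf (S2k k (V,E)) z u w = 1 / sqrt (real (k * degree (V,E) u) * 2)"
      using \<open>u \<noteq> w\<close> degS_V[OF u] degS_W[OF w] by (simp add: chf_def nl_def)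
    then show ?thesis using True by (simp add: cS_def)
  next
    case False
    then show ?thesis using adj_VW[OF u w] \<open>u \<noteq> w\<close> by (simp add: chf_def nl_def)
  qed
qed

lemma chfS_WV: assumes u: "u \<in> V" and w: "w \<in> W"
  shows "chf (S2k k (V,E)) z w u = (if u = mfst w then cS u else 0)"
proof -
  have "w \<noteq> u" using u w W_notV by blast
  have c: "{w,u} = {u,w}" by (simp add: insert_commute)
  show ?thesis
  proof (cases "u = mfst w")
    case True
    then have "{w,u} \<in> snd (S2k k (V,E))" using adj_VW[OF u w] c by simp
    then have "chf (S2k k (V,E)) z w u = 1 / sqrt (2 * real (k * degree (V,E) u))"
      using \<open>w \<noteq> u\<close> degS_V[OF u] degS_W[OF w] by (simp add: chf_def nl_def)
    then show ?thesis using True by (simp add: cS_def mult.commute)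
  next
    case False
    then show ?thesis using adj_VW[OF u w] \<open>w \<noteq> u\<close> c by (simp add: chf_def nl_def)
  qed
qed

lemma chfS_WW: assumes w: "w \<in> W" and w': "w' \<in> W"
  shows "chf (S2k k (V,E)) z w w' = (if w = w' then z - 1 else if w' = partner w then 1/2 else 0)"
proof -
  have s4: "sqrt (2 * 2 :: real) = 2" by (simp add: real_sqrt_mult_self)
  show ?thesis
  proof (cases "w' = partner w")
    case True
    then have "{w,w'} \<in> snd (S2k k (V,E))" "w \<noteq> w'" using adj_WW[OF w w'] partner_neq[OF w] by auto
    then have "chf (S2k k (V,E)) z w w' = 1 / sqrt (real 2 * real 2)"
      using degS_W[OF w] degS_W[OF w'] by (simp add: chf_def nl_def)
    then show ?thesis using True s4 \<open>w \<noteq> w'\<close> by simp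
  next
    case False
    then show ?thesis using adj_WW[OF w w'] by (simp add: chf_def nl_def)
  qed
qed

definition orient :: "'a svert set \<Rightarrow> 'a svert \<times> 'a svert" where
  "orient e = (SOME p. e = {fst p, snd p} \<and> fst p \<noteq> snd p)"

lemma orient: assumes "e \<in> E" shows "e = {fst (orient e), snd (orient e)} \<and> fst (orient e) \<noteq> snd (orient e)"
proof -
  obtain a b where "e = {a,b}" "a \<noteq> b" using Ecard[OF assms] by (meson card_2_iff)
  then have "\<exists>p. e = {fst p, snd p} \<and> fst p \<noteq> snd p" by (intro exI[of _ "(a,b)"]) simp
  then show ?thesis unfolding orient_def by (rule someI_ex)
qed

definition es :: "'a svert set list" where "es = vlist E"
definition ps :: "('a svert set \<times> nat) list" where "ps = List.product es [0..<k]"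
definition ms1 :: "'a svert list" where
  "ms1 = map (\<lambda>(e,i). Mid (fst (orient e)) (snd (orient e)) i) ps"
definition ms2 :: "'a svert list" where "ms2 = map partner ms1"

lemma es: "distinct es" "set es = E" using vlist[OF finE] by (auto simp: es_def)

lemma ps: "distinct ps" "set ps = E \<times> {..<k}"
  using es by (auto simp: ps_def distinct_product)

lemma len_ms1: "length ms1 = card E * k"
  using es ps by (simp add: ms1_def ps_def distinct_card[symmetric])

lemma ms1_mem: "w \<in> set ms1 \<longleftrightarrow> (\<exists>e i. e \<in> E \<and> i < k \<and> w = Mid (fst (orient e)) (snd (orient e)) i)"
  unfolding ms1_def using ps by auto

lemma ms1_W: "w \<in> set ms1 \<Longrightarrow> w \<in> W"
proof -
  assume "w \<in> set ms1"
  then obtain e i where ei: "e \<in> E" "i < k" "w = Mid (fst (orient e)) (snd (orient e)) i"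
    unfolding ms1_mem by blast
  then show "w \<in> W" using orient[OF ei(1)] Mid_W by metis
qed

lemma dist_ms1: "distinct ms1"
  unfolding ms1_def
proof (rule distinct_map[THEN iffD2], intro conjI)
  show "distinct ps" by (rule ps(1))
  show "inj_on (\<lambda>(e,i). Mid (fst (orient e)) (snd (orient e)) i) (set ps)"
  proof (rule inj_onI)
    fix x y assume x: "x \<in> set ps" and y: "y \<in> set ps"
      and eq: "(\<lambda>(e,i). Mid (fst (orient e)) (snd (orient e)) i) x = (\<lambda>(e,i). Mid (fst (orient e)) (snd (orient e)) i) y"
    obtain e i where xe: "x = (e,i)" by (cases x)
    obtain e' i' where ye: "y = (e',i')" by (cases y)
    have E: "e \<in> E" "e' \<in> E" using x y xe ye ps(2) by auto
    have "fst (orient e) = fst (orient e')" "snd (orient e) = snd (orient e')" "i = i'"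
      using eq xe ye by auto
    then have "e = e'" using orient[OF E(1)] orient[OF E(2)] by metis
    then show "x = y" using xe ye \<open>i = i'\<close> by simp
  qed
qed

lemma disj_ms: "set ms1 \<inter> set ms2 = {}"
proof (rule ccontr)
  assume "set ms1 \<inter> set ms2 \<noteq> {}"
  then obtain w where w1: "w \<in> set ms1" and w2: "w \<in> set ms2" by blast
  from w2 obtain w' where w': "w' \<in> set ms1" "w = partner w'" by (auto simp: ms2_def)
  obtain e i where ei: "e \<in> E" "i < k" "w = Mid (fst (orient e)) (snd (orient e)) i"
    using w1 unfolding ms1_mem by blast
  obtain e' i' where ei': "e' \<in> E" "i' < k" "w' = Mid (fst (orient e')) (snd (orient e')) i'"
    using w'(1) unfolding ms1_mem by blast
  have "w = Mid (snd (orient e')) (fst (orient e')) i'" using w'(2) ei'(3) by simp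
  then have a: "fst (orient e) = snd (orient e')" "snd (orient e) = fst (orient e')"
    using ei(3) by auto
  then have "e = e'" using orient[OF ei(1)] orient[OF ei'(1)] by (metis insert_commute)
  then show False using a orient[OF ei(1)] by simp
qed

lemma dist_ms2: "distinct ms2"
  unfolding ms2_def using dist_ms1 by (simp add: distinct_map inj_on_def partner_inj)

lemma dist_ms: "distinct (ms1 @ ms2)" using dist_ms1 dist_ms2 disj_ms by simp

lemma set_ms: "set (ms1 @ ms2) = W"
proof (rule equalityI; rule subsetI)
  fix w assume "w \<in> set (ms1 @ ms2)"
  then show "w \<in> W" using ms1_W partner_W by (auto simp: ms2_def)
next
  fix w assume w: "w \<in> W"
  then obtain a b i where abi: "w = Mid a b i" "{a,b} \<in> E" "i < k" unfolding W_iff by blast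
  define e where "e = {a,b}"
  have o: "e = {fst (orient e), snd (orient e)}" using orient abi(2) e_def by blast
  have m: "Mid (fst (orient e)) (snd (orient e)) i \<in> set ms1" unfolding ms1_mem using abi e_def by blast
  show "w \<in> set (ms1 @ ms2)"
  proof (cases "fst (orient e) = a")
    case True
    then have "snd (orient e) = b" using o e_def eneq[OF abi(2)] by (auto simp: doubleton_eq_iff)
    then show ?thesis using m True abi by simp
  next
    case False
    then have "fst (orient e) = b" "snd (orient e) = a" using o e_def by (auto simp: doubleton_eq_iff)
    then have "w = partner (Mid (fst (orient e)) (snd (orient e)) i)" using abi by simp
    then have "w \<in> partner ` set ms1" using m by blast
    then show ?thesis by (simp add: ms2_def)
  qed
qed

lemma card_W: "card W = 2 * (card E * k)"
proof -
  have "card W = length (ms1 @ ms2)" using distinct_card[OF dist_ms] set_ms by simp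
  then show ?thesis using len_ms1 by (simp add: ms2_def)
qed

end

lemma scal_prod: "((a::'a::comm_ring_1) \<cdot>\<^sub>m 1\<^sub>m n) * (b \<cdot>\<^sub>m 1\<^sub>m n) = (a * b) \<cdot>\<^sub>m 1\<^sub>m n"
proof -
  have "(a \<cdot>\<^sub>m 1\<^sub>m n) * (b \<cdot>\<^sub>m 1\<^sub>m n) = a \<cdot>\<^sub>m (1\<^sub>m n * (b \<cdot>\<^sub>m 1\<^sub>m n))"
    by (rule mult_smult_assoc_mat) auto
  also have "\<dots> = a \<cdot>\<^sub>m (b \<cdot>\<^sub>m 1\<^sub>m n)" by simp
  also have "\<dots> = (a * b) \<cdot>\<^sub>m 1\<^sub>m n" by (rule eq_matI) auto
  finally show ?thesis .
qed

lemma scal_minus: "((a::'a::comm_ring_1) \<cdot>\<^sub>m 1\<^sub>m n) - (b \<cdot>\<^sub>m 1\<^sub>m n) = (a - b) \<cdot>\<^sub>m 1\<^sub>m n"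
  by (rule eq_matI) auto

lemma alg0: "(t::real) * (- (c / 2) / D) + 1/2 * (t * c / D) = 0"
  by (cases "D = 0") (simp_all add: field_simps)

context subd begin

definition yf :: "real \<Rightarrow> 'a svert \<Rightarrow> 'a svert \<Rightarrow> real" where
  "yf z w u = ((z - 1) * (if u = mfst w then cS u else 0) - (if u = msnd w then cS u else 0) / 2)
              / ((z - 1)^2 - 1/4)"

lemma DY: assumes D: "(z - 1)^2 - 1/4 \<noteq> (0::real)" and w: "w \<in> W" and u: "u \<in> V"
  shows "(\<Sum>w'\<in>W. chf (S2k k (V,E)) z w w' * yf z w' u) = chf (S2k k (V,E)) z w u"
proof -
  let ?g = "chf (S2k k (V,E)) z"
  have pw: "partner w \<in> W" "partner w \<noteq> w" using partner_W[OF w] partner_neq[OF w] by auto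
  have "(\<Sum>w'\<in>W. ?g w w' * yf z w' u) = (\<Sum>w'\<in>{w, partner w}. ?g w w' * yf z w' u)"
    by (rule sum.mono_neutral_right) (use finW w pw chfS_WW[OF w] in auto)
  also have "\<dots> = (z - 1) * yf z w u + 1/2 * yf z (partner w) u"
    using pw chfS_WW[OF w w] chfS_WW[OF w pw(1)] by simp
  also have "\<dots> = (if u = mfst w then cS u else 0)"
  proof -
    have ne: "mfst w \<noteq> msnd w" by (rule W_neq[OF w])
    let ?D = "(z - 1)^2 - 1/4"
    show ?thesis
    proof (cases "u = mfst w")
      case True
      then have "u \<noteq> msnd w" using ne by simp
      then have y1: "yf z w u = (z - 1) * cS u / ?D" and y2: "yf z (partner w) u = - (cS u / 2) / ?D"
        using True by (simp_all add: yf_def)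
      have "(z - 1) * ((z - 1) * cS u / ?D) + 1/2 * (- (cS u / 2) / ?D) = cS u * (?D / ?D)"
        by (simp add: field_simps power2_eq_square)
      also have "\<dots> = cS u" using D by simp
      finally show ?thesis using True y1 y2 by simp
    next
      case False
      show ?thesis
      proof (cases "u = msnd w")
        case True
        then have y1: "yf z w u = - (cS u / 2) / ?D" and y2: "yf z (partner w) u = (z - 1) * cS u / ?D"
          using False by (simp_all add: yf_def)
        have "(z - 1) * (- (cS u / 2) / ?D) + 1/2 * ((z - 1) * cS u / ?D) = 0"
          by (rule alg0)
        then show ?thesis using False y1 y2 by simp
      next
        case F2: False
        then have "yf z w u = 0" "yf z (partner w) u = 0" using False by (simp_all add: yf_def)
        then show ?thesis using False by simp
      qed
    qed
  qed
  also have "\<dots> = ?g w u" using chfS_WV[OF u w] by simp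
  finally show ?thesis .
qed

lemma cS_sq: assumes u: "u \<in> V" shows "cS u * cS u = 1 / (2 * real k * real (degree (V,E) u))"
proof -
  have "real (k * degree (V,E) u) * 2 > 0" using kpos degpos[OF u] by simp
  then show ?thesis unfolding cS_def by (simp add: field_simps)
qed

lemma cS_mult: assumes u: "u \<in> V" and v: "v \<in> V"
  shows "real k * (cS u * cS v) = 1 / (2 * sqrt (real (degree (V,E) u) * real (degree (V,E) v)))"
proof -
  have k: "real k > 0" using kpos by simp
  have du: "real (degree (V,E) u) > 0" and dv: "real (degree (V,E) v) > 0" using degpos u v by auto
  have "cS u * cS v = 1 / (sqrt (real k * real k * 4) * sqrt (real (degree (V,E) u) * real (degree (V,E) v)))"
    unfolding cS_def using k du dv by (simp add: real_sqrt_mult field_simps)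
  also have "sqrt (real k * real k * 4) = 2 * real k" using k
    by (simp add: real_sqrt_mult real_sqrt_mult_self)
  finally show ?thesis using k by (simp add: field_simps)
qed

lemma sum_Wu: assumes u: "u \<in> V"
  shows "(\<Sum>w\<in>W. (if u = mfst w then cS u else 0) * f w) = (\<Sum>(b,i)\<in>nbr (V,E) u \<times> {..<k}. cS u * f (Mid u b i))"
proof -
  have "(\<Sum>w\<in>W. (if u = mfst w then cS u else 0) * f w) = (\<Sum>w\<in>W. if mfst w = u then cS u * f w else 0)"
    by (rule sum.cong) auto
  also have "\<dots> = (\<Sum>w\<in>{w \<in> W. mfst w = u}. cS u * f w)"
    by (rule sum.inter_filter[OF finW, symmetric])
  also have "\<dots> = (\<Sum>(b,i)\<in>nbr (V,E) u \<times> {..<k}. cS u * f (Mid u b i))"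
    unfolding Wu_eq[OF u] by (subst sum.reindex[OF Wu_inj]) (simp add: case_prod_beta)
  finally show ?thesis .
qed

lemma BY: assumes D: "(z - 1)^2 - 1/4 \<noteq> (0::real)" and u: "u \<in> V" and v: "v \<in> V"
  shows "chf (S2k k (V,E)) z u v - (\<Sum>w\<in>W. chf (S2k k (V,E)) z u w * yf z w v)
       = 1 / (4 * ((z - 1)^2 - 1/4)) * chf (V,E) (poly fpoly z) u v"
proof -
  let ?D = "(z - 1)^2 - 1/4"
  have fn: "finite (nbr (V,E) u)" by (rule nbr_finite[OF sg])
  have nu: "u \<notin> nbr (V,E) u" using nbr_sub[OF sg] by blast
  have "(\<Sum>w\<in>W. chf (S2k k (V,E)) z u w * yf z w v) = (\<Sum>w\<in>W. (if u = mfst w then cS u else 0) * yf z w v)"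
    by (rule sum.cong) (use chfS_VW[OF u] in auto)
  also have "\<dots> = (\<Sum>(b,i)\<in>nbr (V,E) u \<times> {..<k}. cS u * yf z (Mid u b i) v)" by (rule sum_Wu[OF u])
  finally have s1: "(\<Sum>w\<in>W. chf (S2k k (V,E)) z u w * yf z w v) = (\<Sum>(b,i)\<in>nbr (V,E) u \<times> {..<k}. cS u * yf z (Mid u b i) v)" .
  show ?thesis
  proof (cases "u = v")
    case True
    have "(\<Sum>(b,i)\<in>nbr (V,E) u \<times> {..<k}. cS u * yf z (Mid u b i) v) = (\<Sum>(b,i)\<in>nbr (V,E) u \<times> {..<k}. (z - 1) * (cS u * cS u) / ?D)"
      by (rule sum.cong) (use True nu in \<open>auto simp: yf_def\<close>)
    also have "\<dots> = real (degree (V,E) u) * real k * ((z - 1) * (cS u * cS u) / ?D)"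
      using degree_nbr[OF sg, of u] fn by (simp add: card_cartesian_product)
    also have "\<dots> = (real (degree (V,E) u) * real k * (cS u * cS u)) * ((z - 1) / ?D)"
      by simp
    also have "real (degree (V,E) u) * real k * (cS u * cS u) = 1/2"
      using cS_sq[OF u] kpos degpos[OF u] by simp
    also have "1/2 * ((z - 1) / ?D) = (z - 1) / (2 * ?D)" by simp
    finally have s2: "(\<Sum>w\<in>W. chf (S2k k (V,E)) z u w * yf z w v) = (z - 1) / (2 * ?D)" using s1 by simp
    show ?thesis unfolding s2 using True chfS_VV[OF u v] D
      by (simp add: chf_def nl_def fpoly_def field_simps power2_eq_square)
  next
    case False
    have "(\<Sum>(b,i)\<in>nbr (V,E) u \<times> {..<k}. cS u * yf z (Mid u b i) v)
        = (\<Sum>(b,i)\<in>nbr (V,E) u \<times> {..<k}. (if b = v then - (cS u * cS v) / (2 * ?D) else 0))"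
      by (rule sum.cong) (use False in \<open>auto simp: yf_def\<close>)
    also have "\<dots> = (\<Sum>b\<in>nbr (V,E) u. \<Sum>i<k. (if b = v then - (cS u * cS v) / (2 * ?D) else 0))"
      by (rule sum.cartesian_product[symmetric])
    also have "\<dots> = (\<Sum>b\<in>nbr (V,E) u. (if b = v then - (real k * (cS u * cS v)) / (2 * ?D) else 0))"
      by (rule sum.cong) auto
    also have "\<dots> = (if v \<in> nbr (V,E) u then - (real k * (cS u * cS v)) / (2 * ?D) else 0)"
      using fn by (simp add: sum.delta')
    finally have s2: "(\<Sum>w\<in>W. chf (S2k k (V,E)) z u w * yf z w v)
       = (if {u,v} \<in> E then - (1 / (2 * sqrt (real (degree (V,E) u) * real (degree (V,E) v)))) / (2 * ?D) else 0)"
      using s1 cS_mult[OF u v] by (simp add: nbr_def)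
    define q where "q = sqrt (real (degree (V,E) u) * real (degree (V,E) v))"
    have q: "q > 0" using degpos[OF u] degpos[OF v] by (simp add: q_def)
    have e1: "chf (S2k k (V,E)) z u v = 0" using chfS_VV[OF u v] False by simp
    show ?thesis
    proof (cases "{u,v} \<in> E")
      case True
      have e2: "chf (V,E) (poly fpoly z) u v = 0 - (- 1 / q)" using False True by (simp add: chf_def nl_def q_def)
      have e3: "(\<Sum>w\<in>W. chf (S2k k (V,E)) z u w * yf z w v) = - (1 / (2 * q)) / (2 * ?D)"
        using s2 True by (simp add: q_def)
      show ?thesis unfolding e1 e2 e3 using q by (cases "?D = 0") (simp_all add: field_simps)
    next
      case F2: False
      have e2: "chf (V,E) (poly fpoly z) u v = 0" using False F2 by (simp add: chf_def nl_def)
      have e3: "(\<Sum>w\<in>W. chf (S2k k (V,E)) z u w * yf z w v) = 0" using s2 F2 by simp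
      show ?thesis unfolding e1 e2 e3 by simp
    qed
  qed
qed

lemma det_D: "det (matL (ms1 @ ms2) (ms1 @ ms2) (chf (S2k k (V,E)) z)) = ((z - 1)^2 - 1/4) ^ (card E * k)"
proof -
  let ?g = "chf (S2k k (V,E)) z"
  let ?m = "length ms1"
  have l2: "length ms2 = ?m" by (simp add: ms2_def)
  have inW1: "\<And>p. p < ?m \<Longrightarrow> ms1 ! p \<in> W" by (rule ms1_W, rule nth_mem)
  have n12: "ms1 ! p \<noteq> partner (ms1 ! q)" if p: "p < ?m" and q: "q < ?m" for p q
  proof
    assume eq: "ms1 ! p = partner (ms1 ! q)"
    have a: "ms1 ! p \<in> set ms1" using p by (rule nth_mem)
    have "ms1 ! q \<in> set ms1" using q by (rule nth_mem)
    then have "partner (ms1 ! q) \<in> set ms2" unfolding ms2_def set_map by (rule imageI)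
    then have "ms1 ! p \<in> set ms1 \<inter> set ms2" using a eq by simp
    then show False using disj_ms by simp
  qed
  have eqi: "ms1 ! p = ms1 ! q \<longleftrightarrow> p = q" if "p < ?m" "q < ?m" for p q
    using nth_eq_iff_index_eq[OF dist_ms1] that by simp
  have B11: "matL ms1 ms1 ?g = (z - 1) \<cdot>\<^sub>m 1\<^sub>m ?m"
  proof (rule eq_matI)
    fix p q assume "p < dim_row ((z - 1) \<cdot>\<^sub>m 1\<^sub>m ?m)" "q < dim_col ((z - 1) \<cdot>\<^sub>m 1\<^sub>m ?m)"
    then have p: "p < ?m" and q: "q < ?m" by auto
    show "matL ms1 ms1 ?g $$ (p, q) = ((z - 1) \<cdot>\<^sub>m 1\<^sub>m ?m) $$ (p, q)"
      using chfS_WW[OF inW1[OF p] inW1[OF q]] n12[OF q p] eqi[OF p q] p q by simp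
  qed auto
  have B12: "matL ms1 ms2 ?g = (1/2) \<cdot>\<^sub>m 1\<^sub>m ?m"
  proof (rule eq_matI)
    fix p q assume "p < dim_row ((1/2) \<cdot>\<^sub>m 1\<^sub>m ?m :: real mat)" "q < dim_col ((1/2) \<cdot>\<^sub>m 1\<^sub>m ?m :: real mat)"
    then have p: "p < ?m" and q: "q < ?m" by auto
    have m2: "ms2 ! q = partner (ms1 ! q)" using q by (simp add: ms2_def)
    show "matL ms1 ms2 ?g $$ (p, q) = ((1/2) \<cdot>\<^sub>m 1\<^sub>m ?m) $$ (p, q)"
      using chfS_WW[OF inW1[OF p] partner_W[OF inW1[OF q]]] n12[OF p q] eqi[OF q p] p q l2 m2
      by (simp add: partner_inj)
  qed (auto simp: l2)
  have B21: "matL ms2 ms1 ?g = (1/2) \<cdot>\<^sub>m 1\<^sub>m ?m"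
  proof (rule eq_matI)
    fix p q assume "p < dim_row ((1/2) \<cdot>\<^sub>m 1\<^sub>m ?m :: real mat)" "q < dim_col ((1/2) \<cdot>\<^sub>m 1\<^sub>m ?m :: real mat)"
    then have p: "p < ?m" and q: "q < ?m" by auto
    have m2: "ms2 ! p = partner (ms1 ! p)" using p by (simp add: ms2_def)
    have "partner (ms1 ! p) \<noteq> ms1 ! q" using n12[OF q p] by metis
    then show "matL ms2 ms1 ?g $$ (p, q) = ((1/2) \<cdot>\<^sub>m 1\<^sub>m ?m) $$ (p, q)"
      using chfS_WW[OF partner_W[OF inW1[OF p]] inW1[OF q]] eqi[OF q p] p q l2 m2
      by simp
  qed (auto simp: l2)
  have B22: "matL ms2 ms2 ?g = (z - 1) \<cdot>\<^sub>m 1\<^sub>m ?m"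
  proof (rule eq_matI)
    fix p q assume "p < dim_row ((z - 1) \<cdot>\<^sub>m 1\<^sub>m ?m)" "q < dim_col ((z - 1) \<cdot>\<^sub>m 1\<^sub>m ?m)"
    then have p: "p < ?m" and q: "q < ?m" by auto
    have m2: "ms2 ! p = partner (ms1 ! p)" "ms2 ! q = partner (ms1 ! q)" using p q by (simp_all add: ms2_def)
    have "partner (ms1 ! q) \<noteq> ms1 ! p" using n12[OF p q] by metis
    then show "matL ms2 ms2 ?g $$ (p, q) = ((z - 1) \<cdot>\<^sub>m 1\<^sub>m ?m) $$ (p, q)"
      using chfS_WW[OF partner_W[OF inW1[OF p]] partner_W[OF inW1[OF q]]] eqi[OF p q] p q l2 m2
      by (simp add: partner_inj)
  qed (auto simp: l2)
  have "det (matL (ms1 @ ms2) (ms1 @ ms2) ?g) = det (four_block_mat ((z - 1) \<cdot>\<^sub>m 1\<^sub>m ?m) ((1/2) \<cdot>\<^sub>m 1\<^sub>m ?m) ((1/2) \<cdot>\<^sub>m 1\<^sub>m ?m) ((z - 1) \<cdot>\<^sub>m 1\<^sub>m ?m))"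
    unfolding matL_append B11 B12 B21 B22 ..
  also have "\<dots> = det (((z - 1) \<cdot>\<^sub>m 1\<^sub>m ?m) * ((z - 1) \<cdot>\<^sub>m 1\<^sub>m ?m) - ((1/2) \<cdot>\<^sub>m 1\<^sub>m ?m) * ((1/2) \<cdot>\<^sub>m 1\<^sub>m ?m))"
    by (rule det_four_block_mat) (auto simp: scal_prod mult.commute)
  also have "\<dots> = det (((z - 1)^2 - 1/4) \<cdot>\<^sub>m 1\<^sub>m ?m)"
    by (simp add: scal_prod scal_minus power2_eq_square)
  also have "\<dots> = ((z - 1)^2 - 1/4) ^ ?m" by (simp add: det_smult)
  finally show ?thesis using len_ms1 by simp
qed

end

definition Qp :: "real poly" where "Qp = [:3, -8, 4:]"

lemma poly_Qp: "poly Qp z = 4 * ((z - 1)^2 - 1/4)"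
  by (simp add: Qp_def power2_eq_square algebra_simps)

lemma Qp_nz: "Qp \<noteq> 0" by (simp add: Qp_def)

lemma proots_Qp: "proots Qp = {#1/2, 3/2#}"
proof -
  have "proots Qp = proots (Polynomial.smult 4 ([:-(1/2), 1:] * [:-(3/2), 1:]))"
    by (simp add: Qp_def)
  also have "\<dots> = proots ([:-(1/2), 1:] * [:-(3/2::real), 1:])" by (rule proots_smult) simp
  also have "\<dots> = proots [:-(1/2), 1:] + proots [:-(3/2::real), 1:]" by (rule proots_mult) auto
  also have "\<dots> = {#1/2, 3/2#}" using proots_linear_factor[of "-(1/2::real)"] proots_linear_factor[of "-(3/2::real)"]
    by simp
  finally show ?thesis .
qed

lemma handshake:
  assumes sg: "simple_graph G"
  shows "(\<Sum>x\<in>fst G. degree G x) = 2 * card (snd G)"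
proof -
  have fV: "finite (fst G)" using sg by (simp add: simple_graph_def)
  have fE: "finite (snd G)"
  proof -
    have "snd G \<subseteq> Pow (fst G)" using sg by (auto simp: simple_graph_def)
    then show ?thesis using fV by (meson finite_Pow_iff finite_subset)
  qed
  have "(\<Sum>x\<in>fst G. degree G x) = (\<Sum>x\<in>fst G. \<Sum>e\<in>snd G. if x \<in> e then 1 else 0)"
  proof (rule sum.cong)
    fix x show "degree G x = (\<Sum>e\<in>snd G. if x \<in> e then 1 else 0)"
      unfolding degree_def using sum.inter_filter[OF fE, of "\<lambda>_. 1::nat" "\<lambda>e. x \<in> e"] by simp
  qed simp
  also have "\<dots> = (\<Sum>e\<in>snd G. \<Sum>x\<in>fst G. if x \<in> e then 1 else 0)" by (rule sum.swap)
  also have "\<dots> = (\<Sum>e\<in>snd G. 2)"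
  proof (rule sum.cong)
    fix e assume e: "e \<in> snd G"
    have "(\<Sum>x\<in>fst G. if x \<in> e then 1 else (0::nat)) = card {x \<in> fst G. x \<in> e}"
      using sum.inter_filter[OF fV, of "\<lambda>_. 1::nat" "\<lambda>x. x \<in> e"] by simp
    also have "{x \<in> fst G. x \<in> e} = e" using e sg by (auto simp: simple_graph_def)
    also have "card e = 2" using e sg by (simp add: simple_graph_def)
    finally show "(\<Sum>x\<in>fst G. if x \<in> e then 1 else (0::nat)) = 2" .
  qed simp
  finally show ?thesis by simp
qed

context subd begin

lemma card_VS: "card (fst (S2k k (V,E))) = card V + 2 * (card E * k)"
proof -
  have "V \<inter> W = {}" using W_notV by blast
  then show ?thesis unfolding fstS using finV finW card_W by (simp add: card_Un_disjoint)
qed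

lemma card_ES: "card (snd (S2k k (V,E))) = 3 * (card E * k)"
proof -
  have d: "V \<inter> W = {}" using W_notV by blast
  have "2 * card (snd (S2k k (V,E))) = (\<Sum>x\<in>V \<union> W. degree (S2k k (V,E)) x)"
    using handshake[OF simpleS] fstS by simp
  also have "\<dots> = (\<Sum>x\<in>V. degree (S2k k (V,E)) x) + (\<Sum>x\<in>W. degree (S2k k (V,E)) x)"
    using finV finW d by (simp add: sum.union_disjoint)
  also have "(\<Sum>x\<in>V. degree (S2k k (V,E)) x) = (\<Sum>x\<in>V. k * degree (V,E) x)"
    by (rule sum.cong) (auto simp: degS_V)
  also have "\<dots> = k * (2 * card E)" using handshake[OF sg] by (simp add: sum_distrib_left[symmetric])
  also have "(\<Sum>x\<in>W. degree (S2k k (V,E)) x) = (\<Sum>x\<in>W. 2)"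
    by (rule sum.cong) (auto simp: degS_W)
  also have "\<dots> = 2 * (2 * (card E * k))" using card_W by simp
  finally show ?thesis by simp
qed

lemma det_main:
  assumes D: "(z - 1)^2 - 1/4 \<noteq> (0::real)"
  shows "poly (char_poly (nlap_mat (S2k k (V,E)))) z =
    (1 / (4 * ((z - 1)^2 - 1/4))) ^ card V * poly (char_poly (nlap_mat (V,E))) (poly fpoly z)
      * ((z - 1)^2 - 1/4) ^ (card E * k)"
proof -
  define xs where "xs = vlist V"
  have xs: "distinct xs" "set xs = V" using vlist[OF finV] xs_def by auto
  define ms where "ms = ms1 @ ms2"
  have ms: "distinct ms" "set ms = W" using dist_ms set_ms ms_def by auto
  define g where "g = chf (S2k k (V,E)) z"
  define c where "c = 1 / (4 * ((z - 1)^2 - 1/4))"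
  have dz: "distinct (xs @ ms)" using xs ms W_notV by auto
  have sz: "set (xs @ ms) = fst (S2k k (V,E))" using xs ms fstS by simp
  have finS: "finite (fst (S2k k (V,E)))" using simpleS by (simp add: simple_graph_def)
  define Y where "Y = matL ms xs (yf z)"
  have DYm: "matL ms ms g * Y = matL ms xs g"
    unfolding Y_def matL_mult[OF ms(1)]
    by (rule matL_cong) (use ms xs DY[OF D] in \<open>simp add: g_def\<close>)
  have "poly (char_poly (nlap_mat (S2k k (V,E)))) z = det (matL (xs @ ms) (xs @ ms) g)"
    unfolding g_def by (rule char_eval[OF finS dz sz])
  also have "\<dots> = det (four_block_mat (matL xs xs g) (matL xs ms g) (matL ms xs g) (matL ms ms g))"
    by (simp add: matL_append)
  also have "\<dots> = det (matL xs xs g - matL xs ms g * Y) * det (matL ms ms g)"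
    by (rule schur_det[OF _ _ _ _ _ DYm]) (auto simp: Y_def)
  also have "matL xs xs g - matL xs ms g * Y = c \<cdot>\<^sub>m matL xs xs (chf (V,E) (poly fpoly z))"
  proof -
    have "matL xs xs g - matL xs ms g * Y = matL xs xs (\<lambda>u v. g u v - (\<Sum>w\<in>set ms. g u w * yf z w v))"
      unfolding Y_def matL_mult[OF ms(1)] matL_minus ..
    also have "\<dots> = matL xs xs (\<lambda>u v. c * chf (V,E) (poly fpoly z) u v)"
      by (rule matL_cong) (use ms xs BY[OF D] in \<open>simp add: g_def c_def\<close>)
    also have "\<dots> = c \<cdot>\<^sub>m matL xs xs (chf (V,E) (poly fpoly z))" by (simp add: matL_smult)
    finally show ?thesis .
  qed
  also have "det (c \<cdot>\<^sub>m matL xs xs (chf (V,E) (poly fpoly z))) = c ^ card V * det (matL xs xs (chf (V,E) (poly fpoly z)))"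
    using distinct_card[OF xs(1)] xs(2) by (simp add: det_smult)
  also have "det (matL xs xs (chf (V,E) (poly fpoly z))) = poly (char_poly (nlap_mat (V,E))) (poly fpoly z)"
    by (rule char_eval[symmetric]) (use finV xs in auto)
  also have "det (matL ms ms g) = ((z - 1)^2 - 1/4) ^ (card E * k)"
    unfolding ms_def g_def by (rule det_D)
  finally show ?thesis by (simp add: c_def)
qed

lemma char_identity:
  "char_poly (nlap_mat (S2k k (V,E))) * Qp ^ card V =
   Polynomial.smult ((1/4) ^ (card E * k)) (Qp ^ (card E * k) * (char_poly (nlap_mat (V,E)) \<circ>\<^sub>p fpoly))"
proof (rule poly_eq_cofinite)
  show "finite {z. poly Qp z = 0}" by (rule poly_roots_finite[OF Qp_nz])
next
  fix z assume "z \<notin> {z. poly Qp z = 0}"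
  then have D: "(z - 1)^2 - 1/4 \<noteq> 0" using poly_Qp[of z] by simp
  define D' where "D' = (z - 1)^2 - 1/4"
  have D': "D' \<noteq> 0" using D D'_def by simp
  have "poly (char_poly (nlap_mat (S2k k (V,E))) * Qp ^ card V) z
      = (1 / (4 * D')) ^ card V * poly (char_poly (nlap_mat (V,E))) (poly fpoly z) * D' ^ (card E * k) * (4 * D') ^ card V"
    using det_main[OF D] poly_Qp[of z] by (simp add: D'_def)
  also have "\<dots> = poly (char_poly (nlap_mat (V,E))) (poly fpoly z) * D' ^ (card E * k) * ((1 / (4 * D')) ^ card V * (4 * D') ^ card V)"
    by (simp only: mult_ac)
  also have "(1 / (4 * D')) ^ card V * (4 * D') ^ card V = ((1 / (4 * D')) * (4 * D')) ^ card V"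
    by (rule power_mult_distrib[symmetric])
  also have "(1 / (4 * D')) * (4 * D') = 1" using D' by simp
  also have "poly (char_poly (nlap_mat (V,E))) (poly fpoly z) * D' ^ (card E * k) * 1 ^ card V
      = poly (Polynomial.smult ((1/4) ^ (card E * k)) (Qp ^ (card E * k) * (char_poly (nlap_mat (V,E)) \<circ>\<^sub>p fpoly))) z"
  proof -
    have e: "(4 * (z - 1)^2 - 1) / 4 = (z - 1)^2 - 1/4" by simp
    show ?thesis by (simp add: poly_pcompose poly_Qp D'_def power_mult_distrib[symmetric] e)
  qed
  finally show "poly (char_poly (nlap_mat (S2k k (V,E))) * Qp ^ card V) z = poly (Polynomial.smult ((1/4) ^ (card E * k)) (Qp ^ (card E * k) * (char_poly (nlap_mat (V,E)) \<circ>\<^sub>p fpoly))) z" .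
qed

lemma spec_identity:
  "nlap_spec (S2k k (V,E)) + repeat_mset (card V) {#1/2, 3/2#}
   = repeat_mset (card E * k) {#1/2, 3/2#} + g_all (nlap_spec (V,E))"
proof -
  have nz1: "Qp ^ n \<noteq> 0" for n using Qp_nz by simp
  have cnz: "(1/4::real) ^ (card E * k) \<noteq> 0" by simp
  have nz2: "char_poly (nlap_mat (V,E)) \<circ>\<^sub>p fpoly \<noteq> 0"
    using char_poly_nz pcompose_eq_0_iff[of fpoly] degree_fpoly by simp
  have "proots (char_poly (nlap_mat (S2k k (V,E))) * Qp ^ card V)
      = nlap_spec (S2k k (V,E)) + repeat_mset (card V) {#1/2, 3/2#}"
    unfolding proots_mult[OF char_poly_nz nz1] by (simp add: proots_power proots_Qp nlap_spec_def)
  moreover have "proots (Polynomial.smult ((1/4) ^ (card E * k)) (Qp ^ (card E * k) * (char_poly (nlap_mat (V,E)) \<circ>\<^sub>p fpoly)))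
      = repeat_mset (card E * k) {#1/2, 3/2#} + g_all (nlap_spec (V,E))"
    unfolding proots_smult[OF cnz] proots_mult[OF nz1 nz2]
    by (simp add: proots_power proots_Qp proots_pcompose[OF char_poly_nz] nlap_spec_def)
  ultimately show ?thesis using char_identity by simp
qed

end

lemma card_one_intro: "x \<noteq> y \<Longrightarrow> (x \<in> A) \<noteq> (y \<in> A) \<Longrightarrow> card ({x,y} \<inter> A) = 1"
  by (cases "x \<in> A"; cases "y \<in> A") auto

definition gR :: "'v graph \<Rightarrow> ('v \<times> 'v) set" where
  "gR G = {(x, y). {x, y} \<in> snd G}"

lemma conn_edge:
  assumes sg: "simple_graph G" and c: "connected_graph G" and n2: "card (fst G) \<ge> 2" and x: "x \<in> fst G"
  shows "degree G x > 0"
proof -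
  have fV: "finite (fst G)" using sg by (simp add: simple_graph_def)
  have "\<exists>y\<in>fst G. y \<noteq> x"
  proof (rule ccontr)
    assume "\<not> (\<exists>y\<in>fst G. y \<noteq> x)"
    then have "fst G \<subseteq> {x}" by blast
    then have "card (fst G) \<le> 1" using card_mono[of "{x}"] by fastforce
    then show False using n2 by simp
  qed
  then obtain y where y: "y \<in> fst G" "y \<noteq> x" by blast
  have "(x, y) \<in> (gR G)\<^sup>*" using c x y unfolding connected_graph_def gR_def by blast
  then obtain z where "(x, z) \<in> gR G" using y(2) by (metis converse_rtranclE)
  then have ez: "{x,z} \<in> snd G" by (simp add: gR_def)
  have fE: "finite (snd G)"
  proof -
    have "snd G \<subseteq> Pow (fst G)" using sg by (auto simp: simple_graph_def)
    then show ?thesis using fV by (meson finite_Pow_iff finite_subset)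
  qed
  have "{x,z} \<in> {e \<in> snd G. x \<in> e}" using ez by simp
  moreover have "finite {e \<in> snd G. x \<in> e}" using fE by simp
  ultimately show ?thesis unfolding degree_def by (metis card_gt_0_iff empty_iff)
qed

context
  fixes G :: "'v graph" and v0 :: 'v
  assumes sg: "simple_graph G" and c: "connected_graph G" and v0: "v0 \<in> fst G"
begin

definition dist :: "'v \<Rightarrow> nat" where "dist x = (LEAST n. (x, v0) \<in> gR G ^^ n)"

lemma fV: "finite (fst G)" using sg by (simp add: simple_graph_def)
lemma fE: "finite (snd G)"
proof -
  have "snd G \<subseteq> Pow (fst G)" using sg by (auto simp: simple_graph_def)
  then show ?thesis using fV by (meson finite_Pow_iff finite_subset)
qed

lemma reach: "x \<in> fst G \<Longrightarrow> \<exists>n. (x, v0) \<in> gR G ^^ n"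
  using c v0 unfolding connected_graph_def gR_def by (metis (no_types, lifting) rtrancl_power)

lemma dist_path: "x \<in> fst G \<Longrightarrow> (x, v0) \<in> gR G ^^ dist x"
  unfolding dist_def using reach by (metis LeastI_ex)

lemma dist_le: "(x, v0) \<in> gR G ^^ n \<Longrightarrow> dist x \<le> n"
  unfolding dist_def by (rule Least_le)

lemma dist0: "x \<in> fst G \<Longrightarrow> dist x = 0 \<Longrightarrow> x = v0"
  using dist_path by fastforce

lemma par_ex: assumes x: "x \<in> fst G" and xv: "x \<noteq> v0"
  shows "\<exists>p. {x,p} \<in> snd G \<and> dist p + 1 = dist x"
proof -
  have "dist x \<noteq> 0" using dist0 x xv by blast
  then obtain n where n: "dist x = Suc n" by (cases "dist x") auto
  have "(x, v0) \<in> gR G ^^ Suc n" using dist_path[OF x] n by simp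
  then obtain p where p: "(x, p) \<in> gR G" "(p, v0) \<in> gR G ^^ n" by (metis relpow_Suc_D2)
  have e: "{x,p} \<in> snd G" using p(1) by (simp add: gR_def)
  have "dist p \<le> n" using dist_le p(2) by blast
  moreover have "dist x \<le> dist p + 1"
  proof -
    have pV: "p \<in> fst G" using edge_in[OF sg e] by simp
    have "(x, v0) \<in> gR G ^^ Suc (dist p)" using p(1) dist_path[OF pV] by (metis relpow_Suc_I2)
    then show ?thesis using dist_le by fastforce
  qed
  ultimately have "dist p + 1 = dist x" using n by simp
  then show ?thesis using e by blast
qed

definition par :: "'v \<Rightarrow> 'v" where "par x = (SOME p. {x,p} \<in> snd G \<and> dist p + 1 = dist x)"

lemma par: "x \<in> fst G \<Longrightarrow> x \<noteq> v0 \<Longrightarrow> {x, par x} \<in> snd G \<and> dist (par x) + 1 = dist x"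
  unfolding par_def using par_ex by (rule someI_ex)

definition fe :: "'v \<Rightarrow> 'v set" where "fe x = {x, par x}"

lemma fe_inj: "inj_on fe (fst G - {v0})"
proof (rule inj_onI)
  fix x y assume x: "x \<in> fst G - {v0}" and y: "y \<in> fst G - {v0}" and eq: "fe x = fe y"
  show "x = y"
  proof (rule ccontr)
    assume ne: "x \<noteq> y"
    have px: "dist (par x) + 1 = dist x" and py: "dist (par y) + 1 = dist y" using par x y by auto
    from eq ne have h: "x = par y \<and> par x = y" unfolding fe_def doubleton_eq_iff by blast
    then have "dist y + 1 = dist x" using px by metis
    moreover have "dist x + 1 = dist y" using py h by metis
    ultimately show False by linarith
  qed
qed

lemma fe_E: "fe ` (fst G - {v0}) \<subseteq> snd G"
  using par unfolding fe_def by auto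

lemma card_le: "card (fst G) \<le> card (snd G) + 1"
proof -
  have "card (fst G - {v0}) \<le> card (snd G)"
    using card_inj_on_le[OF fe_inj fe_E fE] .
  then show ?thesis using v0 fV by (simp add: card_Diff_singleton)
qed

lemma card_lt: assumes nb: "\<not> bipartite_graph G" shows "card (fst G) \<le> card (snd G)"
proof (rule ccontr)
  assume "\<not> card (fst G) \<le> card (snd G)"
  then have eqc: "card (fe ` (fst G - {v0})) = card (snd G)"
    using card_le card_image[OF fe_inj] v0 fV by (simp add: card_Diff_singleton)
  then have im: "fe ` (fst G - {v0}) = snd G" using fe_E fE by (metis card_subset_eq)
  define A where "A = {x. even (dist x)}"
  have "\<forall>e\<in>snd G. card (e \<inter> A) = 1"
  proof
    fix e assume "e \<in> snd G"
    then obtain x where x: "x \<in> fst G - {v0}" "e = {x, par x}" using im unfolding fe_def by auto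
    have p: "{x, par x} \<in> snd G" "dist (par x) + 1 = dist x" using par x by auto
    have "x \<noteq> par x" using edge_neq[OF sg p(1)] .
    moreover have "even (dist x) \<longleftrightarrow> \<not> even (dist (par x))"
      using p(2) by (metis even_Suc Suc_eq_plus1)
    then have "(x \<in> A) \<noteq> (par x \<in> A)" unfolding A_def by simp
    ultimately show "card (e \<inter> A) = 1" using x(2) card_one_intro by metis
  qed
  then show False using nb unfolding bipartite_graph_def by blast
qed

end


lemma final_bip:
  fixes SS U :: "real multiset"
  assumes I: "SS + repeat_mset n {#1/2, 3/2#} = repeat_mset m {#1/2, 3/2#} + g_all U"
    and u0: "0 \<in># U" and u2: "2 \<in># U" and nle: "n \<le> m + 2"
  shows "SS = g_all (U - {#0, 2#}) + {#0, 2#} + replicate_mset (m + 2 - n) (1/2) + replicate_mset (m + 2 - n) (3/2)"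
proof -
  have sub: "{#0, 2#} \<subseteq># U" using u0 u2 by (simp add: insert_subset_eq_iff in_diff_count)
  have U: "U = (U - {#0, 2#}) + {#0, 2#}" by (rule subset_mset.diff_add[OF sub, symmetric])
  have gU: "g_all U = g_all (U - {#0, 2#}) + {#0, 3/2, 3/2#} + {#2, 1/2, 1/2#}"
    using arg_cong[OF U, of g_all] by (simp add: g_all_plus g_all_add gcubic0 gcubic2)
  show ?thesis
  proof (rule multiset_eqI)
    fix x
    have "count (SS + repeat_mset n {#1/2, 3/2#}) x = count (repeat_mset m {#1/2, 3/2#} + g_all U) x"
      using I by simp
    then have h: "count SS x + count (repeat_mset n {#1/2, 3/2#}) x = count (repeat_mset m {#1/2, 3/2#}) x
        + (count (g_all (U - {#0, 2#})) x + count {#0, 3/2, 3/2#} x + count {#2, 1/2, 1/2#} x)"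
      unfolding gU by (simp only: count_union)
    show "count SS x = count (g_all (U - {#0, 2#}) + {#0, 2#} + replicate_mset (m + 2 - n) (1/2) + replicate_mset (m + 2 - n) (3/2)) x"
    proof (cases "x = 1/2")
      case True then show ?thesis using h nle by simp
    next
      case F1: False
      show ?thesis
      proof (cases "x = 3/2")
        case True then show ?thesis using h nle by simp
      next
        case F2: False
        then show ?thesis using h F1 by (cases "x = 0"; cases "x = 2") simp_all
      qed
    qed
  qed
qed

lemma final_nonbip:
  fixes SS U :: "real multiset"
  assumes I: "SS + repeat_mset n {#1/2, 3/2#} = repeat_mset m {#1/2, 3/2#} + g_all U"
    and u0: "0 \<in># U" and nle: "n \<le> m"
  shows "SS = g_all (U - {#0#}) + {#0#} + replicate_mset (m - n) (1/2) + replicate_mset (m + 2 - n) (3/2)"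
proof -
  have U: "U = (U - {#0#}) + {#0#}" using u0 by simp
  have gU: "g_all U = g_all (U - {#0#}) + {#0, 3/2, 3/2#}"
    using arg_cong[OF U, of g_all] by (simp add: g_all_plus g_all_add gcubic0)
  show ?thesis
  proof (rule multiset_eqI)
    fix x
    have "count (SS + repeat_mset n {#1/2, 3/2#}) x = count (repeat_mset m {#1/2, 3/2#} + g_all U) x"
      using I by simp
    then have h: "count SS x + count (repeat_mset n {#1/2, 3/2#}) x = count (repeat_mset m {#1/2, 3/2#}) x
        + (count (g_all (U - {#0#})) x + count {#0, 3/2, 3/2#} x)"
      unfolding gU by (simp only: count_union)
    show "count SS x = count (g_all (U - {#0#}) + {#0#} + replicate_mset (m - n) (1/2) + replicate_mset (m + 2 - n) (3/2)) x"
    proof (cases "x = 1/2")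
      case True then show ?thesis using h nle by simp
    next
      case F1: False
      show ?thesis
      proof (cases "x = 3/2")
        case True then show ?thesis using h nle by simp
      next
        case F2: False
        then show ?thesis using h F1 by (cases "x = 0") simp_all
      qed
    qed
  qed
qed


fun depth :: "'a svert \<Rightarrow> nat" where
  "depth (Base x) = 0" | "depth (Mid a b i) = Suc (max (depth a) (depth b))"

definition ginv :: "nat \<Rightarrow> 'a svert graph \<Rightarrow> bool" where
  "ginv j H \<longleftrightarrow> simple_graph H \<and> fst H \<noteq> {} \<and> (\<forall>x\<in>fst H. degree H x > 0)
     \<and> (\<forall>x\<in>fst H. depth x \<le> j) \<and> (\<forall>e\<in>snd H. \<exists>x\<in>e. depth x = j)"

lemma ginv_subd: assumes "ginv j (V,E)" "k \<ge> 1" shows "subd V E k"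
proof
  show "simple_graph (V,E)" using assms by (simp add: ginv_def)
  show "\<And>x. x \<in> V \<Longrightarrow> 0 < degree (V,E) x" using assms by (simp add: ginv_def)
  show "1 \<le> k" by (rule assms(2))
  fix a b i assume e: "{a,b} \<in> E"
  have "\<forall>e\<in>E. \<exists>x\<in>e. depth x = j" using assms(1) by (simp add: ginv_def)
  then have "\<exists>x\<in>{a,b}. depth x = j" using e by (rule bspec)
  then obtain x where x: "x \<in> {a,b}" "depth x = j" by blast
  have "depth (Mid a b i) > j" using x by auto
  moreover have "\<forall>y\<in>V. depth y \<le> j" using assms(1) by (simp add: ginv_def)
  ultimately show "Mid a b i \<notin> V" by auto
qed

lemma ginv_step:
  assumes inv: "ginv j (V,E)" and k: "k \<ge> 1"
  shows "ginv (Suc j) (S2k k (V,E))"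
proof -
  interpret subd V E k by (rule ginv_subd[OF inv k])
  have dV: "\<forall>y\<in>V. depth y \<le> j" using inv by (simp add: ginv_def)
  have dE: "\<forall>e\<in>E. \<exists>x\<in>e. depth x = j" using inv by (simp add: ginv_def)
  have ne: "V \<noteq> {}" using inv by (simp add: ginv_def)
  have midd: "depth (Mid a b i) = Suc j" if "{a,b} \<in> E" for a b i
  proof -
    have da: "depth a \<le> j" and db: "depth b \<le> j" using dV eV[OF that] by auto
    have "\<exists>x\<in>{a,b}. depth x = j" using dE that by (rule bspec)
    then have "depth a = j \<or> depth b = j" by blast
    then show ?thesis using da db by (auto simp: max_def)
  qed
  show ?thesis unfolding ginv_def
  proof (intro conjI ballI)
    show "simple_graph (S2k k (V, E))" by (rule simpleS)
    show "fst (S2k k (V, E)) \<noteq> {}" using ne fstS by simp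
  next
    fix x assume "x \<in> fst (S2k k (V, E))"
    then have "x \<in> V \<or> x \<in> W" using fstS by simp
    then show "0 < degree (S2k k (V, E)) x"
    proof
      assume x: "x \<in> V" then show ?thesis using degS_V[OF x] degpos[OF x] kpos by simp
    next
      assume x: "x \<in> W" then show ?thesis using degS_W[OF x] by simp
    qed
  next
    fix x assume "x \<in> fst (S2k k (V, E))"
    then have "x \<in> V \<or> x \<in> W" using fstS by simp
    then show "depth x \<le> Suc j"
    proof
      assume "x \<in> V" then show ?thesis using dV by auto
    next
      assume "x \<in> W"
      then obtain a b i where "x = Mid a b i" "{a,b} \<in> E" unfolding W_iff by blast
      then show ?thesis using midd by simp
    qed
  next
    fix e assume "e \<in> snd (S2k k (V, E))"
    then obtain a b i where ab: "{a,b} \<in> E" "i < k" and e: "e = {a, Mid a b i} \<or> e = {Mid a b i, Mid b a i}"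
      unfolding sndS_iff by blast
    have "Mid a b i \<in> e" using e by blast
    then show "\<exists>x\<in>e. depth x = Suc j" using midd[OF ab(1)] by blast
  qed
qed

lemma bip_step:
  assumes inv: "ginv j (V,E)" and k: "k \<ge> 1" and bp: "bipartite_graph (V,E)"
  shows "bipartite_graph (S2k k (V,E))"
proof -
  interpret subd V E k by (rule ginv_subd[OF inv k])
  obtain A where A: "\<And>e. e \<in> E \<Longrightarrow> card (e \<inter> A) = 1" using bp unfolding bipartite_graph_def by auto
  define A' where "A' = (A \<inter> V) \<union> {Mid u v i | u v i. {u,v} \<in> E \<and> i < k \<and> u \<notin> A}"
  have memM: "Mid a b i \<in> A' \<longleftrightarrow> a \<notin> A" if ab: "{a,b} \<in> E" "i < k" for a b i
  proof -
    have "Mid a b i \<notin> V" using fresh[OF ab(1)] .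
    then show ?thesis unfolding A'_def using ab by auto
  qed
  have memV: "a \<in> A' \<longleftrightarrow> a \<in> A" if a: "a \<in> V" for a
  proof -
    have "a \<notin> W" using W_notV a by blast
    then have "a \<notin> {Mid u v i | u v i. {u,v} \<in> E \<and> i < k \<and> u \<notin> A}" unfolding W_def by blast
    then show ?thesis unfolding A'_def using a by blast
  qed
  show ?thesis unfolding bipartite_graph_def
  proof (intro exI[of _ A'] ballI)
    fix e assume "e \<in> snd (S2k k (V, E))"
    then obtain a b i where ab: "{a,b} \<in> E" "i < k" and e: "e = {a, Mid a b i} \<or> e = {Mid a b i, Mid b a i}"
      unfolding sndS_iff by blast
    have aV: "a \<in> V" using eV[OF ab(1)] by blast
    show "card (e \<inter> A') = 1"
    proof (cases "e = {a, Mid a b i}")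
      case True
      have "a \<noteq> Mid a b i" using fresh[OF ab(1), of i] aV by metis
      moreover have "(a \<in> A') \<noteq> (Mid a b i \<in> A')" using memV[OF aV] memM[OF ab] by simp
      ultimately show ?thesis using True card_one_intro by metis
    next
      case False
      then have e2: "e = {Mid a b i, Mid b a i}" using e by blast
      have "a \<noteq> b" using eneq[OF ab(1)] .
      then have n: "Mid a b i \<noteq> Mid b a i" by simp
      have "(a \<in> A) \<noteq> (b \<in> A)" using card_one_xor[OF \<open>a \<noteq> b\<close> A[OF ab(1)]] .
      then have "(Mid a b i \<in> A') \<noteq> (Mid b a i \<in> A')" using memM[OF ab] memM[OF esym[OF ab(1)] ab(2)] by simp
      then show ?thesis using e2 n card_one_intro by metis
    qed
  qed
qed

lemma deg_pos_edge: "simple_graph H \<Longrightarrow> e \<in> snd H \<Longrightarrow> x \<in> e \<Longrightarrow> degree H x > 0"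
proof -
  assume sg: "simple_graph H" and e: "e \<in> snd H" and x: "x \<in> e"
  have fV: "finite (fst H)" using sg by (simp add: simple_graph_def)
  have "snd H \<subseteq> Pow (fst H)" using sg by (auto simp: simple_graph_def)
  then have fE: "finite (snd H)" using fV by (meson finite_Pow_iff finite_subset)
  have "e \<in> {e \<in> snd H. x \<in> e}" using e x by simp
  moreover have "finite {e \<in> snd H. x \<in> e}" using fE by simp
  ultimately show ?thesis unfolding degree_def by (metis card_gt_0_iff empty_iff)
qed

lemma lift_facts:
  fixes G :: "'a graph"
  assumes sg: "simple_graph G" and c: "connected_graph G" and n2: "card (fst G) \<ge> 2"
  shows "ginv 0 (lift_graph G)" and "card (fst (lift_graph G)) = card (fst G)"
    and "card (snd (lift_graph G)) = card (snd G)"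
    and "bipartite_graph G \<Longrightarrow> bipartite_graph (lift_graph G)"
proof -
  have injB: "inj Base" by (rule injI) simp
  have fV: "finite (fst G)" using sg by (simp add: simple_graph_def)
  have L: "fst (lift_graph G) = Base ` fst G" "snd (lift_graph G) = (\<lambda>e. Base ` e) ` snd G"
    by (simp_all add: lift_graph_def)
  have sL: "simple_graph (lift_graph G)" unfolding simple_graph_def L
  proof (intro conjI ballI)
    show "finite (Base ` fst G)" using fV by simp
    fix e' assume "e' \<in> (\<lambda>e. Base ` e) ` snd G"
    then obtain e where e: "e \<in> snd G" "e' = Base ` e" by blast
    show "e' \<subseteq> Base ` fst G" using e sg by (auto simp: simple_graph_def)
    show "card e' = 2" using e sg card_image[of Base e] injB by (simp add: simple_graph_def inj_on_def)
  qed
  show "ginv 0 (lift_graph G)" unfolding ginv_def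
  proof (intro conjI ballI)
    show "simple_graph (lift_graph G)" by (rule sL)
    show "fst (lift_graph G) \<noteq> {}" using c L by (simp add: connected_graph_def)
  next
    fix x' assume "x' \<in> fst (lift_graph G)"
    then obtain x where x: "x \<in> fst G" "x' = Base x" using L by blast
    have "degree G x > 0" by (rule conn_edge[OF sg c n2 x(1)])
    then have "{e \<in> snd G. x \<in> e} \<noteq> {}" unfolding degree_def by (metis card.empty less_irrefl)
    then obtain e where e: "e \<in> snd G" "x \<in> e" by blast
    have "Base ` e \<in> snd (lift_graph G)" using e L by simp
    moreover have "x' \<in> Base ` e" using e x by simp
    ultimately show "degree (lift_graph G) x' > 0" using deg_pos_edge[OF sL] by blast
  next
    fix x' assume "x' \<in> fst (lift_graph G)"
    then show "depth x' \<le> 0" using L by auto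
  next
    fix e' assume "e' \<in> snd (lift_graph G)"
    then obtain e where e: "e \<in> snd G" "e' = Base ` e" using L by blast
    have "card e = 2" using e sg by (simp add: simple_graph_def)
    then obtain y where "y \<in> e" by (metis card.empty ex_in_conv zero_neq_numeral)
    then show "\<exists>x\<in>e'. depth x = 0" using e by auto
  qed
  show "card (fst (lift_graph G)) = card (fst G)" using L card_image[of Base] injB by (simp add: inj_on_def)
  have "inj_on (\<lambda>e. Base ` e) (snd G)"
    by (rule inj_onI) (metis injB inj_image_eq_iff)
  then show "card (snd (lift_graph G)) = card (snd G)" using L card_image by metis
  assume "bipartite_graph G"
  then obtain A where A: "\<And>e. e \<in> snd G \<Longrightarrow> card (e \<inter> A) = 1" unfolding bipartite_graph_def by blast
  show "bipartite_graph (lift_graph G)" unfolding bipartite_graph_def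
  proof (intro exI[of _ "Base ` A"] ballI)
    fix e' assume "e' \<in> snd (lift_graph G)"
    then obtain e where e: "e \<in> snd G" "e' = Base ` e" using L by blast
    have "e' \<inter> Base ` A = Base ` (e \<inter> A)" using e(2) image_Int[OF injB, of e A] by simp
    then show "card (e' \<inter> Base ` A) = 1" using A[OF e(1)] card_image[of Base "e \<inter> A"] injB
      by (simp add: inj_on_def)
  qed
qed

lemma iter_facts:
  fixes G :: "'a graph"
  assumes sg: "simple_graph G" and c: "connected_graph G" and n2: "card (fst G) \<ge> 2" and k: "k \<ge> 1"
  shows "ginv j ((S2k k ^^ j) (lift_graph G))
    \<and> (bipartite_graph G \<longrightarrow> bipartite_graph ((S2k k ^^ j) (lift_graph G))
         \<and> card (fst ((S2k k ^^ j) (lift_graph G))) \<le> k * card (snd ((S2k k ^^ j) (lift_graph G))) + 2)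
    \<and> (\<not> bipartite_graph G \<longrightarrow> card (fst ((S2k k ^^ j) (lift_graph G))) \<le> k * card (snd ((S2k k ^^ j) (lift_graph G))))"
proof (induction j)
  case 0
  obtain v0 where v0: "v0 \<in> fst G" using c unfolding connected_graph_def by blast
  have c1: "card (fst G) \<le> card (snd G) + 1" by (rule card_le[OF sg c v0])
  have c2: "\<not> bipartite_graph G \<Longrightarrow> card (fst G) \<le> card (snd G)" by (rule card_lt[OF sg c v0])
  have km: "card (snd G) \<le> k * card (snd G)" using k by simp
  have a: "card (fst G) \<le> k * card (snd G) + 2" using c1 km by linarith
  have b: "\<not> bipartite_graph G \<Longrightarrow> card (fst G) \<le> k * card (snd G)" using c2 km by linarith
  show ?case using lift_facts[OF sg c n2] a b by (simp del: One_nat_def)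
next
  case (Suc j)
  define H where "H = (S2k k ^^ j) (lift_graph G)"
  obtain V E where VE: "H = (V, E)" by (cases H)
  have inv: "ginv j (V,E)" using Suc VE H_def by simp
  interpret subd V E k by (rule ginv_subd[OF inv k])
  have step: "(S2k k ^^ Suc j) (lift_graph G) = S2k k (V,E)" using VE H_def by simp
  have cV: "card (fst (S2k k (V,E))) = card V + 2 * (card E * k)" by (rule card_VS)
  have cE: "card (snd (S2k k (V,E))) = 3 * (card E * k)" by (rule card_ES)
  have mono: "3 * (card E * k) \<le> k * (3 * (card E * k))" using k by simp
  show ?case unfolding step
  proof (intro conjI impI)
    show "ginv (Suc j) (S2k k (V, E))" by (rule ginv_step[OF inv k])
  next
    assume bG: "bipartite_graph G"
    then have b: "bipartite_graph (V,E)" and le: "card V \<le> k * card E + 2" using Suc VE H_def by auto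
    show "bipartite_graph (S2k k (V, E))" by (rule bip_step[OF inv k b])
    show "card (fst (S2k k (V, E))) \<le> k * card (snd (S2k k (V, E))) + 2"
      unfolding cV cE using le mono mult.commute[of k "card E"] by linarith
  next
    assume bG: "\<not> bipartite_graph G"
    then have le: "card V \<le> k * card E" using Suc VE H_def by auto
    show "card (fst (S2k k (V, E))) \<le> k * card (snd (S2k k (V, E)))"
      unfolding cV cE using le mono mult.commute[of k "card E"] by linarith
  qed
qed

theorem theorem5p1:
  fixes G :: "'a graph" and k r :: nat
  assumes "simple_graph G" and "connected_graph G" and "card (fst G) \<ge> 2"
    and "k \<ge> 1" and "r \<ge> 1"
  defines "H \<equiv> (S2k k ^^ (r - 1)) (lift_graph G)"
  shows "(bipartite_graph G \<longrightarrow>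
           nlap_spec (S2k k H) =
             g_all (nlap_spec H - {#0, 2#}) + {#0, 2#}
             + replicate_mset (k * card (snd H) + 2 - card (fst H)) (1/2)
             + replicate_mset (k * card (snd H) + 2 - card (fst H)) (3/2))
       \<and> (\<not> bipartite_graph G \<longrightarrow>
           nlap_spec (S2k k H) =
             g_all (nlap_spec H - {#0#}) + {#0#}
             + replicate_mset (k * card (snd H) - card (fst H)) (1/2)
             + replicate_mset (k * card (snd H) + 2 - card (fst H)) (3/2))"
proof -
  have F: "ginv (r - 1) H
    \<and> (bipartite_graph G \<longrightarrow> bipartite_graph H \<and> card (fst H) \<le> k * card (snd H) + 2)
    \<and> (\<not> bipartite_graph G \<longrightarrow> card (fst H) \<le> k * card (snd H))"
    unfolding H_def by (rule iter_facts[OF assms(1-4)])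
  obtain V E where VE: "H = (V, E)" by (cases H)
  have inv: "ginv (r - 1) (V,E)" using F VE by simp
  interpret subd V E k by (rule ginv_subd[OF inv assms(4)])
  have I: "nlap_spec (S2k k (V,E)) + repeat_mset (card V) {#1/2, 3/2#}
      = repeat_mset (card E * k) {#1/2, 3/2#} + g_all (nlap_spec (V,E))" by (rule spec_identity)
  have ne: "V \<noteq> {}" using inv by (simp add: ginv_def)
  have z0: "0 \<in># nlap_spec (V,E)" by (rule spec_zero[OF sg]) (use ne degpos in auto)
  show ?thesis
  proof (intro conjI impI)
    assume bG: "bipartite_graph G"
    then have b: "bipartite_graph (V,E)" and le: "card V \<le> card E * k + 2" using F VE by (auto simp: mult.commute)
    have z2: "2 \<in># nlap_spec (V,E)" by (rule spec_two[OF sg _ _ b]) (use ne degpos in auto)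
    show "nlap_spec (S2k k H) =
             g_all (nlap_spec H - {#0, 2#}) + {#0, 2#}
             + replicate_mset (k * card (snd H) + 2 - card (fst H)) (1/2)
             + replicate_mset (k * card (snd H) + 2 - card (fst H)) (3/2)"
      using final_bip[OF I z0 z2 le] VE by (simp add: mult.commute)
  next
    assume bG: "\<not> bipartite_graph G"
    then have le: "card V \<le> card E * k" using F VE by (auto simp: mult.commute)
    show "nlap_spec (S2k k H) =
             g_all (nlap_spec H - {#0#}) + {#0#}
             + replicate_mset (k * card (snd H) - card (fst H)) (1/2)
             + replicate_mset (k * card (snd H) + 2 - card (fst H)) (3/2)"
      using final_nonbip[OF I z0 le] VE by (simp add: mult.commute)
  qed
qed


end
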